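(* Let $t$ be a term with $\vdash t:A$ in the sub-affine type system for $\lambda_{\text{coin}}$. If $t$ reduces to the distribution $D_1$ and $t$ reduces to the distribution $D_2$, then $D_1\equiv D_2$ (computational equivalence).
   Context: Terms of $\lambda_{\text{coin}}$: $t ::= x \mid \lambda x.t \mid t\,t \mid 1 \mid 0 \mid \mathsf{if}\ t\ \mathsf{then}\ t\ \mathsf{else}\ t \mid \mathsf{coin}$. One-step probabilistic reduction $t\to_p r$: base rules $(\lambda x.t)r \to_1 t[r/x]$, $\mathsf{if}\ 1\ \mathsf{then}\ t\ \mathsf{else}\ u \to_1 t$, $\mathsf{if}\ 0\ \mathsf{then}\ t\ \mathsf{else}\ u \to_1 u$, $\mathsf{coin}\to_{1/2}1$, $\mathsf{coin}\to_{1/2}0$, closed under all contexts (under $\lambda$, both sides of an application, and all three positions of an if-then-else). We write $t\to^*_{q} r$ if $t\to_{p_1}\cdots\to_{p_n} r$ with $q=\prod_i p_i$. A distribution of terms is a finite list $[(p_i,t_i)]_i$; reduction is lifted to distributions by choosing a redex in a term $t$ with one-step reducts $t\to_{q_j}t'_j$ ($\sum_j q_j=1$) and replacing $(p,t)$ by the entries $(pq_j,t'_j)$; a term $t$ reduces to $D$ if $D$ is obtained from $[(1,t)]$ by finitely many such steps. Equality $\sim$ of distributions means they assign the same total probability to each term. Types: $A ::= \mathbb{B} \mid A\to A$. Sub-affine type system (contexts written as $\Gamma,\Delta$ are required to be disjoint): $\Gamma,x:A\vdash x:A$; from $\Gamma,x:A\vdash t:B$ infer $\Gamma\vdash\lambda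 x.t:A\to B$; from $\Gamma\vdash t:A\to B$ and $\Delta\vdash r:A$ infer $\Gamma,\Delta\vdash tr:B$; $\Gamma\vdash 1:\mathbb{B}$, $\Gamma\vdash 0:\mathbb{B}$, $\Gamma\vdash\mathsf{coin}:\mathbb{B}$; from $\Gamma\vdash t:\mathbb{B}$, $\Delta\vdash u:A$, $\Delta\vdash v:A$ infer $\Gamma,\Delta\vdash \mathsf{if}\ t\ \mathsf{then}\ u\ \mathsf{else}\ v:A$ (the two branches share the same context). Elimination contexts: $C ::= \lozenge \mid C\,v$ where $v$ ranges over closed terms in normal form; $C\langle t\rangle$ denotes $C[t/\lozenge]$. $C$ is an elimination context of type $A$, written $C^A$, if for every $t$ with $\vdash t:A$ we have $\vdash C\langle t\rangle:\mathbb{B}$. Computational equivalence: for distributions $D_1=[(p_i,t_i)]_i$ and $D_2=[(q_j,r_j)]_j$ of closed terms of type $A$, $D_1\equiv D_2$ if for every $C^A$, reducing we get $C\langle t_i\rangle\to^*_{u_{ik}} b_{ik}$ and $C\langle r_j\rangle\to^*_{s_{jh}} c_{jh}$ with all $b_{ik},c_{jh}$ in normal form (the $[(u_{ik},b_{ik})]_k$ forming a reduction of $C\langle t_i\rangle$ to a distribution of normal forms, and likewise for $C\langle r_j\rangle$), such that $[(p_iu_{ik},b_{ik})]_{ik}\sim[(q_js_{jh},c_{jh})]_{jh}$. *)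

theory Defs
  imports Complex_Main
begin

datatype tm = Var nat | Lam tm | App tm tm | One | Zero | Ite tm tm tm | Coin

datatype ty = TB | Arr ty ty

fun lift :: "tm \<Rightarrow> nat \<Rightarrow> tm" where
  "lift (Var i) k = (if i < k then Var i else Var (Suc i))"
| "lift (Lam t) k = Lam (lift t (Suc k))"
| "lift (App t u) k = App (lift t k) (lift u k)"
| "lift One k = One"
| "lift Zero k = Zero"
| "lift (Ite t u v) k = Ite (lift t k) (lift u k) (lift v k)"
| "lift Coin k = Coin"

fun subst :: "tm \<Rightarrow> tm \<Rightarrow> nat \<Rightarrow> tm" where
  "subst (Var i) s k = (if k < i then Var (i - 1) else if i = k then s else Var i)"
| "subst (Lam t) s k = Lam (subst t (lift s 0) (Suc k))"
| "subst (App t u) s k = App (subst t s k) (subst u s k)"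
| "subst One s k = One"
| "subst Zero s k = Zero"
| "subst (Ite t u v) s k = Ite (subst t s k) (subst u s k) (subst v s k)"
| "subst Coin s k = Coin"

text \<open>rstep t L: choosing one redex in t, its one-step reducts are the
  entries (q_j, t'_j) of L (so the q_j sum to 1).\<close>

inductive rstep :: "tm \<Rightarrow> (real \<times> tm) list \<Rightarrow> bool" where
  beta: "rstep (App (Lam t) r) [(1, subst t r 0)]"
| ifT: "rstep (Ite One t u) [(1, t)]"
| ifF: "rstep (Ite Zero t u) [(1, u)]"
| coin: "rstep Coin [(1/2, One), (1/2, Zero)]"
| lam: "rstep t L \<Longrightarrow> rstep (Lam t) (map (apsnd Lam) L)"
| appL: "rstep t L \<Longrightarrow> rstep (App t r) (map (apsnd (\<lambda>x. App x r)) L)"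
| appR: "rstep r L \<Longrightarrow> rstep (App t r) (map (apsnd (\<lambda>x. App t x)) L)"
| ite1: "rstep t L \<Longrightarrow> rstep (Ite t u v) (map (apsnd (\<lambda>x. Ite x u v)) L)"
| ite2: "rstep u L \<Longrightarrow> rstep (Ite t u v) (map (apsnd (\<lambda>x. Ite t x v)) L)"
| ite3: "rstep v L \<Longrightarrow> rstep (Ite t u v) (map (apsnd (\<lambda>x. Ite t u x)) L)"

definition step :: "tm \<Rightarrow> real \<Rightarrow> tm \<Rightarrow> bool" where
  "step t p r \<longleftrightarrow> (\<exists>L. rstep t L \<and> (p, r) \<in> set L)"

definition is_nf :: "tm \<Rightarrow> bool" where
  "is_nf t \<longleftrightarrow> \<not> (\<exists>p r. step t p r)"

type_synonym dist = "(real \<times> tm) list"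

definition dstep :: "dist \<Rightarrow> dist \<Rightarrow> bool" where
  "dstep D D' \<longleftrightarrow> (\<exists>xs ys p t L. D = xs @ (p, t) # ys \<and> rstep t L \<and>
      D' = xs @ map (\<lambda>(q, t'). (p * q, t')) L @ ys)"

definition reduces_to :: "tm \<Rightarrow> dist \<Rightarrow> bool" where
  "reduces_to t D \<longleftrightarrow> dstep\<^sup>*\<^sup>* [(1, t)] D"

definition dist_sim :: "dist \<Rightarrow> dist \<Rightarrow> bool" where
  "dist_sim D1 D2 \<longleftrightarrow> (\<forall>s. sum_list (map fst (filter (\<lambda>x. snd x = s) D1)) =
                             sum_list (map fst (filter (\<lambda>x. snd x = s) D2)))"

type_synonym ctx = "nat \<Rightarrow> ty option"

definition ext_ctx :: "ty \<Rightarrow> ctx \<Rightarrow> ctx" where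
  "ext_ctx A \<Gamma> = (\<lambda>i. case i of 0 \<Rightarrow> Some A | Suc j \<Rightarrow> \<Gamma> j)"

inductive typing :: "ctx \<Rightarrow> tm \<Rightarrow> ty \<Rightarrow> bool" where
  tvar: "\<Gamma> i = Some A \<Longrightarrow> typing \<Gamma> (Var i) A"
| tlam: "typing (ext_ctx A \<Gamma>) t B \<Longrightarrow> typing \<Gamma> (Lam t) (Arr A B)"
| tapp: "typing \<Gamma> t (Arr A B) \<Longrightarrow> typing \<Delta> r A \<Longrightarrow> dom \<Gamma> \<inter> dom \<Delta> = {}
         \<Longrightarrow> typing (\<Gamma> ++ \<Delta>) (App t r) B"
| tone: "typing \<Gamma> One TB"
| tzero: "typing \<Gamma> Zero TB"
| tcoin: "typing \<Gamma> Coin TB"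
| tite: "typing \<Gamma> t TB \<Longrightarrow> typing \<Delta> u A \<Longrightarrow> typing \<Delta> v A \<Longrightarrow> dom \<Gamma> \<inter> dom \<Delta> = {}
         \<Longrightarrow> typing (\<Gamma> ++ \<Delta>) (Ite t u v) A"

fun closed_at :: "nat \<Rightarrow> tm \<Rightarrow> bool" where
  "closed_at k (Var i) = (i < k)"
| "closed_at k (Lam t) = closed_at (Suc k) t"
| "closed_at k (App t u) = (closed_at k t \<and> closed_at k u)"
| "closed_at k One = True"
| "closed_at k Zero = True"
| "closed_at k (Ite t u v) = (closed_at k t \<and> closed_at k u \<and> closed_at k v)"
| "closed_at k Coin = True"

definition closed :: "tm \<Rightarrow> bool" where
  "closed t \<longleftrightarrow> closed_at 0 t"

text \<open>An elimination context C = \<lozenge> v1 ... vn is represented by the list [v1,...,vn];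
  plug t vs = C<t> = (...((t v1) v2)...) vn.\<close>
definition plug :: "tm \<Rightarrow> tm list \<Rightarrow> tm" where
  "plug t vs = foldl App t vs"

definition elim_ctx :: "ty \<Rightarrow> tm list \<Rightarrow> bool" where
  "elim_ctx A vs \<longleftrightarrow> (\<forall>v\<in>set vs. closed v \<and> is_nf v) \<and>
     (\<forall>t. typing Map.empty t A \<longrightarrow> typing Map.empty (plug t vs) TB)"

definition weighted :: "dist \<Rightarrow> dist list \<Rightarrow> dist" where
  "weighted D Es = concat (map2 (\<lambda>(p, _) E. map (\<lambda>(u, b). (p * u, b)) E) D Es)"

definition comp_equiv :: "ty \<Rightarrow> dist \<Rightarrow> dist \<Rightarrow> bool" where
  "comp_equiv A D1 D2 \<longleftrightarrow>
     (\<forall>x\<in>set D1 \<union> set D2. typing Map.empty (snd x) A) \<and>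
     (\<forall>vs. elim_ctx A vs \<longrightarrow>
        (\<exists>E1 E2. length E1 = length D1 \<and> length E2 = length D2 \<and>
          (\<forall>i<length D1. reduces_to (plug (snd (D1 ! i)) vs) (E1 ! i) \<and>
                          (\<forall>x\<in>set (E1 ! i). is_nf (snd x))) \<and>
          (\<forall>j<length D2. reduces_to (plug (snd (D2 ! j)) vs) (E2 ! j) \<and>
                          (\<forall>x\<in>set (E2 ! j). is_nf (snd x))) \<and>
          dist_sim (weighted D1 E1) (weighted D2 E2)))"

end

theory Submission
  imports Defs
begin

type_synonym vec = "nat \<Rightarrow> real"
type_synonym env = "nat \<Rightarrow> vec"

fun tdim :: "ty \<Rightarrow> nat" where
  "tdim TB = 1"
| "tdim (Arr A B) = Suc (tdim A) * tdim B"

lemma dim_pos: "0 < tdim A"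
  by (induction A) auto

definition comb :: "real \<Rightarrow> vec \<Rightarrow> vec \<Rightarrow> vec" where
  "comb q x y = (\<lambda>j. q * x j + (1 - q) * y j)"

definition app :: "nat \<Rightarrow> nat \<Rightarrow> vec \<Rightarrow> vec \<Rightarrow> vec" where
  "app n m f a = (\<lambda>j. if j < m then f j + (\<Sum>k<n. a k * (f (Suc k * m + j) - f j)) else 0)"

definition pt :: "nat \<Rightarrow> vec" where
  "pt k = (\<lambda>i. if k = Suc i then 1 else 0)"

definition mkfun :: "nat \<Rightarrow> nat \<Rightarrow> (vec \<Rightarrow> vec) \<Rightarrow> vec" where
  "mkfun n m g = (\<lambda>i. if i < Suc n * m then g (pt (i div m)) (i mod m) else 0)"

definition shift :: "vec \<Rightarrow> env \<Rightarrow> env" where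
  "shift a \<rho> = (\<lambda>i. case i of 0 \<Rightarrow> a | Suc j \<Rightarrow> \<rho> j)"

definition bvec :: "real \<Rightarrow> vec" where
  "bvec p = (\<lambda>j. if j = 0 then p else 0)"

definition vsup :: "nat \<Rightarrow> vec \<Rightarrow> bool" where
  "vsup n x \<longleftrightarrow> (\<forall>j\<ge>n. x j = 0)"

definition wf :: "ctx \<Rightarrow> env \<Rightarrow> bool" where
  "wf \<Gamma> \<rho> \<longleftrightarrow> (\<forall>i A. \<Gamma> i = Some A \<longrightarrow> vsup (tdim A) (\<rho> i))"

inductive den :: "ctx \<Rightarrow> tm \<Rightarrow> ty \<Rightarrow> (env \<Rightarrow> vec) \<Rightarrow> bool" where
  dvar: "\<Gamma> i = Some A \<Longrightarrow> den \<Gamma> (Var i) A (\<lambda>\<rho>. \<rho> i)"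
| dlam: "den (ext_ctx A \<Gamma>) t B F \<Longrightarrow>
     den \<Gamma> (Lam t) (Arr A B) (\<lambda>\<rho>. mkfun (tdim A) (tdim B) (\<lambda>a. F (shift a \<rho>)))"
| dapp: "den \<Gamma> t (Arr A B) F \<Longrightarrow> den \<Delta> r A G \<Longrightarrow> dom \<Gamma> \<inter> dom \<Delta> = {} \<Longrightarrow>
     den (\<Gamma> ++ \<Delta>) (App t r) B (\<lambda>\<rho>. app (tdim A) (tdim B) (F \<rho>) (G \<rho>))"
| d_one: "den \<Gamma> One TB (\<lambda>\<rho>. bvec 1)"
| d_zero: "den \<Gamma> Zero TB (\<lambda>\<rho>. bvec 0)"
| d_coin: "den \<Gamma> Coin TB (\<lambda>\<rho>. bvec (1/2))"
| d_ite: "den \<Gamma> t TB F \<Longrightarrow> den \<Delta> u A U \<Longrightarrow> den \<Delta> v A V \<Longrightarrow> dom \<Gamma> \<inter> dom \<Delta> = {} \<Longrightarrow>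
     den (\<Gamma> ++ \<Delta>) (Ite t u v) A (\<lambda>\<rho>. comb (F \<rho> 0) (U \<rho>) (V \<rho>))"

lemma den_typing: "den \<Gamma> t A F \<Longrightarrow> typing \<Gamma> t A"
  by (induction rule: den.induct) (auto intro: typing.intros)

lemma typing_den: "typing \<Gamma> t A \<Longrightarrow> \<exists>F. den \<Gamma> t A F"
  by (induction rule: typing.induct) (auto intro: den.intros)

lemma wf_add: "wf (\<Gamma> ++ \<Delta>) \<rho> \<Longrightarrow> dom \<Gamma> \<inter> dom \<Delta> = {} \<Longrightarrow> wf \<Gamma> \<rho> \<and> wf \<Delta> \<rho>"
  unfolding wf_def
  by (metis disjoint_iff domI map_add_dom_app_simps(1) map_add_dom_app_simps(3))

lemma wf_shift: "wf \<Gamma> \<rho> \<Longrightarrow> vsup (tdim A) a \<Longrightarrow> wf (ext_ctx A \<Gamma>) (shift a \<rho>)"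
  unfolding wf_def ext_ctx_def shift_def by (auto split: nat.splits)

lemma sup_comb: "vsup n x \<Longrightarrow> vsup n y \<Longrightarrow> vsup n (comb q x y)"
  unfolding vsup_def comb_def by auto

lemma den_sup: "den \<Gamma> t A F \<Longrightarrow> wf \<Gamma> \<rho> \<Longrightarrow> vsup (tdim A) (F \<rho>)"
proof (induction arbitrary: \<rho> rule: den.induct)
  case (dvar \<Gamma> i A)
  then show ?case by (auto simp: wf_def)
next
  case (dlam A \<Gamma> t B F)
  then show ?case by (auto simp: vsup_def mkfun_def)
next
  case (dapp \<Gamma> t A B F \<Delta> r G)
  then show ?case by (auto simp: vsup_def app_def)
next
  case (d_ite \<Gamma> t F \<Delta> u A U v V)
  then show ?case using wf_add[OF d_ite.prems d_ite.hyps(4)] by (auto intro: sup_comb)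
qed (auto simp: vsup_def bvec_def)

lemma den_local: "den \<Gamma> t A F \<Longrightarrow> (\<forall>i\<in>dom \<Gamma>. \<rho> i = \<rho>' i) \<Longrightarrow> F \<rho> = F \<rho>'"
proof (induction arbitrary: \<rho> \<rho>' rule: den.induct)
  case (dlam A \<Gamma> t B F)
  have "\<And>a. F (shift a \<rho>) = F (shift a \<rho>')"
    apply (rule dlam.IH)
    using dlam.prems by (auto simp: ext_ctx_def shift_def split: nat.splits)
  then show ?case by simp
next
  case (dapp \<Gamma> t A B F \<Delta> r G)
  then show ?case by (metis domIff map_add_None)
next
  case (d_ite \<Gamma> t F \<Delta> u A U v V)
  then show ?case by (metis domIff map_add_None)
qed auto

lemma comb_same[simp]: "comb q z z = z"
  unfolding comb_def by (auto simp: algebra_simps)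

lemma shift_upd: "shift a (\<rho>(i := v)) = (shift a \<rho>)(Suc i := v)"
  unfolding shift_def by (auto split: nat.splits)

lemma mkfun_comb: "mkfun n m (\<lambda>a. comb q (g1 a) (g2 a)) = comb q (mkfun n m g1) (mkfun n m g2)"
  unfolding mkfun_def comb_def by auto

lemma app_comb_f: "app n m (comb q f1 f2) a = comb q (app n m f1 a) (app n m f2 a)"
proof (rule ext)
  fix j
  have "(\<Sum>k<n. a k * (q * f1 (Suc k * m + j) + (1 - q) * f2 (Suc k * m + j) - (q * f1 j + (1 - q) * f2 j)))
     = q * (\<Sum>k<n. a k * (f1 (Suc k * m + j) - f1 j)) + (1 - q) * (\<Sum>k<n. a k * (f2 (Suc k * m + j) - f2 j))"
    by (simp add: sum_distrib_left sum.distrib[symmetric] algebra_simps)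
  then show "app n m (comb q f1 f2) a j = comb q (app n m f1 a) (app n m f2 a) j"
    unfolding app_def comb_def by (simp add: algebra_simps)
qed

lemma app_comb_a: "app n m f (comb q a1 a2) = comb q (app n m f a1) (app n m f a2)"
proof (rule ext)
  fix j
  have "(\<Sum>k<n. (q * a1 k + (1 - q) * a2 k) * (f (Suc k * m + j) - f j))
     = q * (\<Sum>k<n. a1 k * (f (Suc k * m + j) - f j)) + (1 - q) * (\<Sum>k<n. a2 k * (f (Suc k * m + j) - f j))"
    by (simp add: sum_distrib_left sum.distrib[symmetric] algebra_simps)
  then show "app n m f (comb q a1 a2) j = comb q (app n m f a1) (app n m f a2) j"
    unfolding app_def comb_def by (simp add: algebra_simps)
qed

lemma comb_comb_c: "comb (q * c1 + (1 - q) * c2) u v = comb q (comb c1 u v) (comb c2 u v)"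
  unfolding comb_def by (auto simp: algebra_simps)

lemma comb_comb_uv: "comb c (comb q u1 u2) (comb q v1 v2) = comb q (comb c u1 v1) (comb c u2 v2)"
  unfolding comb_def by (auto simp: algebra_simps)

lemma den_affine: "den \<Gamma> t A F \<Longrightarrow>
   F (\<rho>(i := comb q x y)) = comb q (F (\<rho>(i := x))) (F (\<rho>(i := y)))"
proof (induction arbitrary: \<rho> i rule: den.induct)
  case (dvar \<Gamma> i A)
  then show ?case by auto
next
  case (dlam A \<Gamma> t B F)
  have IH': "\<And>a. F (shift a (\<rho>(i:= comb q x y))) = comb q (F (shift a (\<rho>(i:=x)))) (F (shift a (\<rho>(i:=y))))"
    unfolding shift_upd by (rule dlam.IH)
  show ?case by (simp only: IH' mkfun_comb)
next
  case (dapp \<Gamma> t A B F \<Delta> r G)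
  show ?case
  proof (cases "i \<in> dom \<Gamma>")
    case True
    then have "i \<notin> dom \<Delta>" using dapp.hyps(3) by auto
    then have "\<And>v. G (\<rho>(i := v)) = G \<rho>"
      by (intro den_local[OF dapp.hyps(2)]) auto
    then show ?thesis by (simp only: dapp.IH app_comb_f comb_same)
  next
    case False
    then have "\<And>v. F (\<rho>(i := v)) = F \<rho>"
      by (intro den_local[OF dapp.hyps(1)]) auto
    then show ?thesis by (simp only: dapp.IH app_comb_a comb_same)
  qed
next
  case (d_ite \<Gamma> t F \<Delta> u A U v V)
  show ?case
  proof (cases "i \<in> dom \<Gamma>")
    case True
    then have "i \<notin> dom \<Delta>" using d_ite.hyps(4) by auto
    then have "\<And>w. U (\<rho>(i := w)) = U \<rho>" "\<And>w. V (\<rho>(i := w)) = V \<rho>"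
      by (intro den_local[OF d_ite.hyps(2)] den_local[OF d_ite.hyps(3)]; auto)+
    then show ?thesis by (simp only: d_ite.IH comb_same) (simp add: comb_def algebra_simps)
  next
    case False
    then have "\<And>v. F (\<rho>(i := v)) = F \<rho>"
      by (intro den_local[OF d_ite.hyps(1)]) auto
    then show ?thesis by (simp only: d_ite.IH comb_comb_uv comb_same)
  qed
qed auto

lemma pt0: "pt 0 = (\<lambda>i. 0)"
  unfolding pt_def by auto

lemma sup_mono: "vsup p x \<Longrightarrow> p \<le> n \<Longrightarrow> vsup n x"
  unfolding vsup_def by auto

lemma sup_pt: "k \<le> n \<Longrightarrow> vsup n (pt k)"
  unfolding vsup_def pt_def by auto

lemma rep_aux:
  assumes aff: "\<forall>x y q. vsup n x \<longrightarrow> vsup n y \<longrightarrow> g (comb q x y) = comb q (g x) (g y)"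
  shows "p \<le> n \<Longrightarrow> vsup p a \<Longrightarrow>
     g a = (\<lambda>j. g (pt 0) j + (\<Sum>k<p. a k * (g (pt (Suc k)) j - g (pt 0) j)))"
proof (induction p arbitrary: a)
  case 0
  then have "a = pt 0" unfolding vsup_def pt0 by auto
  then show ?case by simp
next
  case (Suc p)
  define a' where "a' = a(p := 0)"
  have sa': "vsup p a'" using Suc.prems unfolding vsup_def a'_def by auto
  have IH: "g a' = (\<lambda>j. g (pt 0) j + (\<Sum>k<p. a' k * (g (pt (Suc k)) j - g (pt 0) j)))"
    using Suc.IH[OF _ sa'] Suc.prems by auto
  have sum_eq: "(\<Sum>k<p. a' k * (g (pt (Suc k)) j - g (pt 0) j)) = (\<Sum>k<p. a k * (g (pt (Suc k)) j - g (pt 0) j))" for j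
    by (rule sum.cong) (auto simp: a'_def)
  define z where "z = pt 0"
  define e where "e = pt (Suc p)"
  have sz: "vsup n z" "vsup n e" using Suc.prems by (auto simp: z_def e_def intro: sup_pt)
  have sa'n: "vsup n a'" using sa' Suc.prems by (auto intro: sup_mono)
  define X where "X = comb 2 a' z"
  define Y where "Y = comb (2 * a p) e z"
  have sX: "vsup n X" "vsup n Y" using sz sa'n by (auto simp: X_def Y_def intro: sup_comb)
  have aXY: "a = comb (1/2) X Y"
    by (rule ext) (auto simp: X_def Y_def comb_def z_def e_def pt_def a'_def)
  have "g a = comb (1/2) (g X) (g Y)" using aff sX aXY by auto
  also have "g X = comb 2 (g a') (g z)" using aff sa'n sz by (auto simp: X_def)
  also have "g Y = comb (2 * a p) (g e) (g z)" using aff sz by (auto simp: Y_def)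
  finally have ga: "g a = comb (1 / 2) (comb 2 (g a') (g z)) (comb (2 * a p) (g e) (g z))" .
  show ?case
  proof (rule ext)
    fix j
    show "g a j = g (pt 0) j + (\<Sum>k<Suc p. a k * (g (pt (Suc k)) j - g (pt 0) j))"
      unfolding ga using sum_eq[of j]
      by (simp add: comb_def IH z_def e_def algebra_simps)
  qed
qed

lemma rep:
  assumes "vsup n a"
    and aff: "\<forall>x y q. vsup n x \<longrightarrow> vsup n y \<longrightarrow> g (comb q x y) = comb q (g x) (g y)"
    and sg: "\<forall>x. vsup n x \<longrightarrow> vsup m (g x)"
  shows "app n m (mkfun n m g) a = g a"
proof (rule ext)
  fix j
  have ga: "g a = (\<lambda>j. g (pt 0) j + (\<Sum>k<n. a k * (g (pt (Suc k)) j - g (pt 0) j)))"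
    using rep_aux[OF aff, of n a] assms(1) by auto
  show "app n m (mkfun n m g) a j = g a j"
  proof (cases "j < m")
    case True
    have m0: "j < Suc n * m" using True by (simp add: less_le_trans)
    have k: "Suc k * m + j < Suc n * m \<and> (Suc k * m + j) div m = Suc k \<and> (Suc k * m + j) mod m = j"
      if "k < n" for k
    proof -
      have "Suc k * m + j < Suc k * m + m" using True by simp
      also have "\<dots> = Suc (Suc k) * m" by simp
      also have "\<dots> \<le> Suc n * m" using that by (intro mult_le_mono1) simp
      finally have lt: "Suc k * m + j < Suc n * m" .
      have m0': "m \<noteq> 0" using True by simp
      have "(j + Suc k * m) div m = Suc k + j div m" using div_mult_self1[OF m0'] by blast
      moreover have "(j + Suc k * m) mod m = j mod m" using mod_mult_self1 by blast
      ultimately show ?thesis using lt True by (simp add: add.commute)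
    qed
    have "(\<Sum>k<n. a k * (mkfun n m g (Suc k * m + j) - mkfun n m g j)) =
          (\<Sum>k<n. a k * (g (pt (Suc k)) j - g (pt 0) j))"
    proof (rule sum.cong)
      fix k assume "k \<in> {..<n}"
      then have kk: "Suc k * m + j < Suc n * m \<and> (Suc k * m + j) div m = Suc k \<and> (Suc k * m + j) mod m = j"
        using k by blast
      have "mkfun n m g (Suc k * m + j) = g (pt (Suc k)) j"
        unfolding mkfun_def using kk by (simp only: if_True)
      moreover have "mkfun n m g j = g (pt 0) j" unfolding mkfun_def using m0 True by simp
      ultimately show "a k * (mkfun n m g (Suc k * m + j) - mkfun n m g j) = a k * (g (pt (Suc k)) j - g (pt 0) j)"
        by simp
    qed simp
    then show ?thesis using True m0 unfolding app_def ga by (simp add: mkfun_def)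
  next
    case False
    then show ?thesis using sg assms(1) unfolding app_def vsup_def by auto
  qed
qed

definition downc :: "nat \<Rightarrow> ctx \<Rightarrow> ctx" where
  "downc k \<Gamma> = (\<lambda>i. if i < k then \<Gamma> i else \<Gamma> (Suc i))"
definition liftc :: "nat \<Rightarrow> ctx \<Rightarrow> ctx" where
  "liftc k \<Delta> = (\<lambda>i. if i < k then \<Delta> i else if i = k then None else \<Delta> (i - 1))"
definition insenv :: "nat \<Rightarrow> vec \<Rightarrow> env \<Rightarrow> env" where
  "insenv k x \<rho> = (\<lambda>i. if i < k then \<rho> i else if i = k then x else \<rho> (i - 1))"
definition dropenv :: "nat \<Rightarrow> env \<Rightarrow> env" where
  "dropenv k \<rho> = (\<lambda>i. if i < k then \<rho> i else \<rho> (Suc i))"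

lemma disj_iff: "dom X \<inter> dom Y = {} \<longleftrightarrow> (\<forall>i. X i = None \<or> Y i = None)"
  by (auto simp: disjoint_iff domIff) (metis option.distinct(1))

lemma add_None: "(X ++ Y) i = None \<longleftrightarrow> X i = None \<and> Y i = None"
  by auto

lemma liftc_ext: "liftc (Suc k) (ext_ctx A \<Delta>) = ext_ctx A (liftc k \<Delta>)"
  unfolding liftc_def ext_ctx_def by (auto split: nat.splits)

lemma liftc_add: "liftc k (\<Gamma> ++ \<Delta>) = liftc k \<Gamma> ++ liftc k \<Delta>"
  unfolding liftc_def by (rule ext) (auto simp: map_add_def split: option.splits)

lemma liftc_disj: "dom \<Gamma> \<inter> dom \<Delta> = {} \<Longrightarrow> dom (liftc k \<Gamma>) \<inter> dom (liftc k \<Delta>) = {}"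
  unfolding disj_iff liftc_def by auto

lemma downc_ext: "downc (Suc k) (ext_ctx A \<Gamma>) = ext_ctx A (downc k \<Gamma>)"
  unfolding downc_def ext_ctx_def by (auto split: nat.splits)

lemma downc_add: "downc k (\<Gamma> ++ \<Delta>) = downc k \<Gamma> ++ downc k \<Delta>"
  unfolding downc_def by (rule ext) (auto simp: map_add_def split: option.splits)

lemma downc_disj: "dom \<Gamma> \<inter> dom \<Delta> = {} \<Longrightarrow> dom (downc k \<Gamma>) \<inter> dom (downc k \<Delta>) = {}"
  unfolding disj_iff downc_def by auto

lemma dropenv_shift: "dropenv (Suc k) (shift a \<rho>) = shift a (dropenv k \<rho>)"
  unfolding dropenv_def shift_def by (auto split: nat.splits)

lemma insenv_shift: "insenv (Suc k) x (shift a \<rho>) = shift a (insenv k x \<rho>)"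
  unfolding insenv_def shift_def by (rule ext) (auto split: nat.splits)

lemma insenv0: "insenv 0 x \<rho> = shift x \<rho>"
  unfolding insenv_def shift_def by (rule ext) (auto split: nat.splits)

lemma dropenv0_shift: "dropenv 0 (shift a \<rho>) = \<rho>"
  unfolding dropenv_def shift_def by auto

lemma weaken_split:
  assumes le: "\<Gamma> ++ \<Delta> \<subseteq>\<^sub>m \<Gamma>'" and d: "dom \<Gamma> \<inter> dom \<Delta> = {}"
  shows "\<Gamma> \<subseteq>\<^sub>m \<Gamma>' |` (- dom \<Delta>)" "dom (\<Gamma>' |` (- dom \<Delta>)) \<inter> dom \<Delta> = {}"
    "(\<Gamma>' |` (- dom \<Delta>)) ++ \<Delta> = \<Gamma>'"
proof -
  show "\<Gamma> \<subseteq>\<^sub>m \<Gamma>' |` (- dom \<Delta>)" unfolding map_le_def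
  proof
    fix a assume a: "a \<in> dom \<Gamma>"
    then have na: "a \<notin> dom \<Delta>" using d by blast
    then have "(\<Gamma> ++ \<Delta>) a = \<Gamma> a" by (simp add: map_add_dom_app_simps(3))
    moreover have "a \<in> dom (\<Gamma> ++ \<Delta>)" using a by simp
    with le have "(\<Gamma> ++ \<Delta>) a = \<Gamma>' a" by (metis map_le_def)
    ultimately show "\<Gamma> a = (\<Gamma>' |` (- dom \<Delta>)) a" using na by (metis ComplI restrict_map_def)
  qed
  show "dom (\<Gamma>' |` (- dom \<Delta>)) \<inter> dom \<Delta> = {}" by auto
  have le2: "\<Delta> \<subseteq>\<^sub>m \<Gamma>'" using le map_le_map_add map_le_trans by blast
  show "(\<Gamma>' |` (- dom \<Delta>)) ++ \<Delta> = \<Gamma>'"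
  proof
    fix a show "((\<Gamma>' |` (- dom \<Delta>)) ++ \<Delta>) a = \<Gamma>' a"
    proof (cases "a \<in> dom \<Delta>")
      case True
      then show ?thesis using le2 unfolding map_le_def by (simp add: map_add_dom_app_simps(1))
    next
      case False
      then show ?thesis by (simp add: map_add_dom_app_simps(3))
    qed
  qed
qed

lemma den_weaken: "den \<Gamma> t A F \<Longrightarrow> \<Gamma> \<subseteq>\<^sub>m \<Gamma>' \<Longrightarrow> den \<Gamma>' t A F"
proof (induction arbitrary: \<Gamma>' rule: den.induct)
  case (dvar \<Gamma> i A)
  then have "\<Gamma>' i = Some A" by (metis domI map_le_def)
  then show ?case by (auto intro: den.dvar)
next
  case (dlam A \<Gamma> t B F)
  have "ext_ctx A \<Gamma> \<subseteq>\<^sub>m ext_ctx A \<Gamma>'"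
    using dlam.prems unfolding map_le_def ext_ctx_def by (auto split: nat.splits)
  then show ?case using dlam.IH by (auto intro: den.dlam)
next
  case (dapp \<Gamma> t A B F \<Delta> r G)
  note w = weaken_split[OF dapp.prems dapp.hyps(3)]
  show ?case using den.dapp[OF dapp.IH(1)[OF w(1)] dapp.IH(2)[OF map_le_refl] w(2)] w(3) by simp
next
  case (d_ite \<Gamma> t F \<Delta> u A U v V)
  note w = weaken_split[OF d_ite.prems d_ite.hyps(4)]
  show ?case using den.d_ite[OF d_ite.IH(1)[OF w(1)] d_ite.IH(2)[OF map_le_refl] d_ite.IH(3)[OF map_le_refl] w(2)] w(3) by simp
qed (auto intro: den.intros)

lemma den_lift: "den \<Delta> s A G \<Longrightarrow> \<exists>G'. den (liftc k \<Delta>) (lift s k) A G' \<and> (\<forall>\<rho>. G' \<rho> = G (dropenv k \<rho>))"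
proof (induction arbitrary: k rule: den.induct)
  case (dvar \<Gamma> i A)
  show ?case
  proof (cases "i < k")
    case True
    then show ?thesis using dvar by (intro exI[where x="\<lambda>\<rho>. \<rho> i"]) (auto simp: liftc_def dropenv_def intro!: den.dvar)
  next
    case False
    then show ?thesis using dvar by (intro exI[where x="\<lambda>\<rho>. \<rho> (Suc i)"]) (auto simp: liftc_def dropenv_def intro!: den.dvar)
  qed
next
  case (dlam A \<Gamma> t B F)
  obtain G' where G': "den (liftc (Suc k) (ext_ctx A \<Gamma>)) (lift t (Suc k)) B G'"
      "\<forall>\<rho>. G' \<rho> = F (dropenv (Suc k) \<rho>)" using dlam.IH by blast
  show ?case using den.dlam[OF G'(1)[unfolded liftc_ext]] G'(2)
    by (auto simp: dropenv_shift)
next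
  case (dapp \<Gamma> t A B F \<Delta> r G)
  obtain F' where F': "den (liftc k \<Gamma>) (lift t k) (Arr A B) F'" "\<forall>\<rho>. F' \<rho> = F (dropenv k \<rho>)"
    using dapp.IH(1) by blast
  obtain G' where G': "den (liftc k \<Delta>) (lift r k) A G'" "\<forall>\<rho>. G' \<rho> = G (dropenv k \<rho>)"
    using dapp.IH(2) by blast
  show ?case using den.dapp[OF F'(1) G'(1) liftc_disj[OF dapp.hyps(3)]] F'(2) G'(2)
    by (auto simp: liftc_add)
next
  case (d_ite \<Gamma> t F \<Delta> u A U v V)
  obtain F' where F': "den (liftc k \<Gamma>) (lift t k) TB F'" "\<forall>\<rho>. F' \<rho> = F (dropenv k \<rho>)"
    using d_ite.IH(1) by blast
  obtain U' where U': "den (liftc k \<Delta>) (lift u k) A U'" "\<forall>\<rho>. U' \<rho> = U (dropenv k \<rho>)"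
    using d_ite.IH(2) by blast
  obtain V' where V': "den (liftc k \<Delta>) (lift v k) A V'" "\<forall>\<rho>. V' \<rho> = V (dropenv k \<rho>)"
    using d_ite.IH(3) by blast
  show ?case using den.d_ite[OF F'(1) U'(1) V'(1) liftc_disj[OF d_ite.hyps(4)]] F'(2) U'(2) V'(2)
    by (auto simp: liftc_add)
qed (auto intro: den.intros)

lemma den_subst_none: "den \<Gamma> t B F \<Longrightarrow> \<Gamma> k = None \<Longrightarrow>
  \<exists>F'. den (downc k \<Gamma>) (subst t s k) B F' \<and> (\<forall>\<rho> x. F' \<rho> = F (insenv k x \<rho>))"
proof (induction arbitrary: k s rule: den.induct)
  case (dvar \<Gamma> i A)
  then have "i \<noteq> k" by auto
  show ?case
  proof (cases "k < i")
    case True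
    then show ?thesis using dvar by (intro exI[where x="\<lambda>\<rho>. \<rho> (i - 1)"]) (auto simp: downc_def insenv_def intro!: den.dvar)
  next
    case False
    then show ?thesis using dvar \<open>i \<noteq> k\<close> by (intro exI[where x="\<lambda>\<rho>. \<rho> i"]) (auto simp: downc_def insenv_def intro!: den.dvar)
  qed
next
  case (dlam A \<Gamma> t B F)
  have "ext_ctx A \<Gamma> (Suc k) = None" using dlam.prems by (simp add: ext_ctx_def)
  then obtain F' where F': "den (downc (Suc k) (ext_ctx A \<Gamma>)) (subst t (lift s 0) (Suc k)) B F'"
      "\<forall>\<rho> x. F' \<rho> = F (insenv (Suc k) x \<rho>)" using dlam.IH by blast
  have "mkfun (tdim A) (tdim B) (\<lambda>a. F' (shift a \<rho>)) = mkfun (tdim A) (tdim B) (\<lambda>a. F (shift a (insenv k x \<rho>)))" for \<rho> x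
  proof -
    have "\<And>a. F' (shift a \<rho>) = F (shift a (insenv k x \<rho>))" using F'(2) insenv_shift by metis
    then show ?thesis by simp
  qed
  then show ?case using den.dlam[OF F'(1)[unfolded downc_ext]]
    by (intro exI[where x="\<lambda>\<rho>. mkfun (tdim A) (tdim B) (\<lambda>a. F' (shift a \<rho>))"]) auto
next
  case (dapp \<Gamma> t A B F \<Delta> r G)
  have n: "\<Gamma> k = None" "\<Delta> k = None" using dapp.prems by (auto simp: add_None)
  obtain F' where F': "den (downc k \<Gamma>) (subst t s k) (Arr A B) F'" "\<forall>\<rho> x. F' \<rho> = F (insenv k x \<rho>)"
    using dapp.IH(1)[OF n(1)] by blast
  obtain G' where G': "den (downc k \<Delta>) (subst r s k) A G'" "\<forall>\<rho> x. G' \<rho> = G (insenv k x \<rho>)"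
    using dapp.IH(2)[OF n(2)] by blast
  show ?case
  proof (intro exI conjI allI)
    show "den (downc k (\<Gamma> ++ \<Delta>)) (subst (App t r) s k) B (\<lambda>\<rho>. app (tdim A) (tdim B) (F' \<rho>) (G' \<rho>))"
      using den.dapp[OF F'(1) G'(1) downc_disj[OF dapp.hyps(3)]] by (simp add: downc_add)
    fix \<rho> x
    show "app (tdim A) (tdim B) (F' \<rho>) (G' \<rho>) = app (tdim A) (tdim B) (F (insenv k x \<rho>)) (G (insenv k x \<rho>))"
      using F'(2) G'(2) by metis
  qed
next
  case (d_ite \<Gamma> t F \<Delta> u A U v V)
  have n: "\<Gamma> k = None" "\<Delta> k = None" using d_ite.prems by (auto simp: add_None)
  obtain F' where F': "den (downc k \<Gamma>) (subst t s k) TB F'" "\<forall>\<rho> x. F' \<rho> = F (insenv k x \<rho>)"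
    using d_ite.IH(1)[OF n(1)] by blast
  obtain U' where U': "den (downc k \<Delta>) (subst u s k) A U'" "\<forall>\<rho> x. U' \<rho> = U (insenv k x \<rho>)"
    using d_ite.IH(2)[OF n(2)] by blast
  obtain V' where V': "den (downc k \<Delta>) (subst v s k) A V'" "\<forall>\<rho> x. V' \<rho> = V (insenv k x \<rho>)"
    using d_ite.IH(3)[OF n(2)] by blast
  show ?case
  proof (intro exI conjI allI)
    show "den (downc k (\<Gamma> ++ \<Delta>)) (subst (Ite t u v) s k) A (\<lambda>\<rho>. comb (F' \<rho> 0) (U' \<rho>) (V' \<rho>))"
      using den.d_ite[OF F'(1) U'(1) V'(1) downc_disj[OF d_ite.hyps(4)]] by (simp add: downc_add)
    fix \<rho> x
    show "comb (F' \<rho> 0) (U' \<rho>) (V' \<rho>) = comb (F (insenv k x \<rho>) 0) (U (insenv k x \<rho>)) (V (insenv k x \<rho>))"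
      using F'(2) U'(2) V'(2) by metis
  qed
qed (auto intro: den.intros)

lemma ext_add: "ext_ctx A X ++ liftc 0 Y = ext_ctx A (X ++ Y)"
  unfolding ext_ctx_def liftc_def by (rule ext) (auto simp: map_add_def split: nat.splits option.splits)

lemma dom_add_disj: "dom (X ++ Y) \<inter> dom Z = {} \<longleftrightarrow> dom X \<inter> dom Z = {} \<and> dom Y \<inter> dom Z = {}"
  by auto

lemma add_swap: "dom Y \<inter> dom Z = {} \<Longrightarrow> (X ++ Y) ++ Z = (X ++ Z) ++ Y"
  by (metis map_add_assoc map_add_comm)

lemma den_subst: "den \<Gamma> t B F \<Longrightarrow> \<Gamma> k = Some A \<Longrightarrow> den \<Delta> s A G \<Longrightarrow> dom (downc k \<Gamma>) \<inter> dom \<Delta> = {} \<Longrightarrow>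
  \<exists>F'. den (downc k \<Gamma> ++ \<Delta>) (subst t s k) B F' \<and> (\<forall>\<rho>. F' \<rho> = F (insenv k (G \<rho>) \<rho>))"
proof (induction arbitrary: k s \<Delta> G A rule: den.induct)
  case (dvar \<Gamma> i B)
  show ?case
  proof (cases "i = k")
    case True
    then have "A = B" using dvar by simp
    have "den (downc k \<Gamma> ++ \<Delta>) s A G"
      by (rule den_weaken[OF dvar.prems(2)]) (rule map_le_map_add)
    then show ?thesis using True \<open>A = B\<close> by (intro exI[where x=G]) (auto simp: insenv_def)
  next
    case False
    define i' where "i' = (if k < i then i - 1 else i)"
    have g: "downc k \<Gamma> i' = Some B" using dvar.hyps False by (auto simp: downc_def i'_def)
    then have "\<Delta> i' = None" using dvar.prems(3) unfolding disj_iff by (metis option.distinct(1))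
    then have "(downc k \<Gamma> ++ \<Delta>) i' = Some B" using g by (simp add: map_add_def)
    then have "den (downc k \<Gamma> ++ \<Delta>) (Var i') B (\<lambda>\<rho>. \<rho> i')" by (rule den.dvar)
    moreover have "subst (Var i) s k = Var i'" using False by (simp add: i'_def)
    moreover have "\<forall>\<rho>. \<rho> i' = insenv k (G \<rho>) \<rho> i" using False by (auto simp: insenv_def i'_def)
    ultimately show ?thesis by (intro exI[where x="\<lambda>\<rho>. \<rho> i'"]) auto
  qed
next
  case (dlam A' \<Gamma> t B' F)
  obtain G' where G': "den (liftc 0 \<Delta>) (lift s 0) A G'" "\<forall>\<rho>. G' \<rho> = G (dropenv 0 \<rho>)"
    using den_lift[OF dlam.prems(2)] by blast
  have d: "dom (downc (Suc k) (ext_ctx A' \<Gamma>)) \<inter> dom (liftc 0 \<Delta>) = {}"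
    using dlam.prems(3) unfolding downc_ext disj_iff by (auto simp: ext_ctx_def liftc_def split: nat.splits)
  have "ext_ctx A' \<Gamma> (Suc k) = Some A" using dlam.prems(1) by (simp add: ext_ctx_def)
  then obtain F'' where F'': "den (downc (Suc k) (ext_ctx A' \<Gamma>) ++ liftc 0 \<Delta>) (subst t (lift s 0) (Suc k)) B' F''"
      "\<forall>\<rho>. F'' \<rho> = F (insenv (Suc k) (G' \<rho>) \<rho>)"
    using dlam.IH[OF _ G'(1) d] by blast
  have den': "den (downc k \<Gamma> ++ \<Delta>) (Lam (subst t (lift s 0) (Suc k))) (Arr A' B')
     (\<lambda>\<rho>. mkfun (tdim A') (tdim B') (\<lambda>a. F'' (shift a \<rho>)))"
    using den.dlam[OF F''(1)[unfolded downc_ext ext_add]] .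
  have "\<And>\<rho> a. F'' (shift a \<rho>) = F (shift a (insenv k (G \<rho>) \<rho>))"
    using F''(2) G'(2) by (simp add: dropenv0_shift insenv_shift)
  then show ?case using den' by (intro exI[where x="\<lambda>\<rho>. mkfun (tdim A') (tdim B') (\<lambda>a. F'' (shift a \<rho>))"]) auto
next
  case (dapp \<Gamma>1 t1 A1 B1 F1 \<Gamma>2 t2 F2)
  have dd: "dom (downc k \<Gamma>1) \<inter> dom \<Delta> = {}" "dom (downc k \<Gamma>2) \<inter> dom \<Delta> = {}"
    using dapp.prems(3) unfolding downc_add dom_add_disj by auto
  have d12: "dom (downc k \<Gamma>1) \<inter> dom (downc k \<Gamma>2) = {}" using downc_disj[OF dapp.hyps(3)] .
  show ?case
  proof (cases "\<Gamma>2 k = None")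
    case True
    then have k1: "\<Gamma>1 k = Some A" using dapp.prems(1) by (simp add: map_add_def)
    obtain F1' where F1': "den (downc k \<Gamma>1 ++ \<Delta>) (subst t1 s k) (Arr A1 B1) F1'"
       "\<forall>\<rho>. F1' \<rho> = F1 (insenv k (G \<rho>) \<rho>)" using dapp.IH(1)[OF k1 dapp.prems(2) dd(1)] by blast
    obtain F2' where F2': "den (downc k \<Gamma>2) (subst t2 s k) A1 F2'"
       "\<forall>\<rho> x. F2' \<rho> = F2 (insenv k x \<rho>)" using den_subst_none[OF dapp.hyps(2) True] by blast
    have dj: "dom (downc k \<Gamma>1 ++ \<Delta>) \<inter> dom (downc k \<Gamma>2) = {}"
      using dd d12 unfolding dom_add_disj by auto
    have eq: "(downc k \<Gamma>1 ++ \<Delta>) ++ downc k \<Gamma>2 = downc k (\<Gamma>1 ++ \<Gamma>2) ++ \<Delta>"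
      unfolding downc_add using add_swap[of \<Delta> "downc k \<Gamma>2" "downc k \<Gamma>1"] dd(2) by (simp add: Int_commute)
    have den': "den (downc k (\<Gamma>1 ++ \<Gamma>2) ++ \<Delta>) (subst (App t1 t2) s k) B1
        (\<lambda>\<rho>. app (tdim A1) (tdim B1) (F1' \<rho>) (F2' \<rho>))"
      using den.dapp[OF F1'(1) F2'(1) dj] eq by simp
    show ?thesis
      by (rule exI[where x="\<lambda>\<rho>. app (tdim A1) (tdim B1) (F1' \<rho>) (F2' \<rho>)"], rule conjI[OF den']) (metis F1'(2) F2'(2))
  next
    case False
    then have k2: "\<Gamma>2 k = Some A" using dapp.prems(1) by (auto simp: map_add_def)
    then have k1: "\<Gamma>1 k = None" using dapp.hyps(3) unfolding disj_iff by (metis option.distinct(1))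
    obtain F2' where F2': "den (downc k \<Gamma>2 ++ \<Delta>) (subst t2 s k) A1 F2'"
       "\<forall>\<rho>. F2' \<rho> = F2 (insenv k (G \<rho>) \<rho>)" using dapp.IH(2)[OF k2 dapp.prems(2) dd(2)] by blast
    obtain F1' where F1': "den (downc k \<Gamma>1) (subst t1 s k) (Arr A1 B1) F1'"
       "\<forall>\<rho> x. F1' \<rho> = F1 (insenv k x \<rho>)" using den_subst_none[OF dapp.hyps(1) k1] by blast
    have dj: "dom (downc k \<Gamma>1) \<inter> dom (downc k \<Gamma>2 ++ \<Delta>) = {}"
      using dd d12 by auto
    have eq: "downc k \<Gamma>1 ++ (downc k \<Gamma>2 ++ \<Delta>) = downc k (\<Gamma>1 ++ \<Gamma>2) ++ \<Delta>"
      unfolding downc_add by simp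
    have den': "den (downc k (\<Gamma>1 ++ \<Gamma>2) ++ \<Delta>) (subst (App t1 t2) s k) B1
        (\<lambda>\<rho>. app (tdim A1) (tdim B1) (F1' \<rho>) (F2' \<rho>))"
      using den.dapp[OF F1'(1) F2'(1) dj] eq by simp
    show ?thesis
      by (rule exI[where x="\<lambda>\<rho>. app (tdim A1) (tdim B1) (F1' \<rho>) (F2' \<rho>)"], rule conjI[OF den']) (metis F1'(2) F2'(2))
  qed
next
  case (d_ite \<Gamma>1 c F1 \<Gamma>2 u A1 U v V)
  have dd: "dom (downc k \<Gamma>1) \<inter> dom \<Delta> = {}" "dom (downc k \<Gamma>2) \<inter> dom \<Delta> = {}"
    using d_ite.prems(3) unfolding downc_add dom_add_disj by auto
  have d12: "dom (downc k \<Gamma>1) \<inter> dom (downc k \<Gamma>2) = {}" using downc_disj[OF d_ite.hyps(4)] .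
  show ?case
  proof (cases "\<Gamma>2 k = None")
    case True
    then have k1: "\<Gamma>1 k = Some A" using d_ite.prems(1) by (simp add: map_add_def)
    obtain F1' where F1': "den (downc k \<Gamma>1 ++ \<Delta>) (subst c s k) TB F1'"
       "\<forall>\<rho>. F1' \<rho> = F1 (insenv k (G \<rho>) \<rho>)" using d_ite.IH(1)[OF k1 d_ite.prems(2) dd(1)] by blast
    obtain U' where U': "den (downc k \<Gamma>2) (subst u s k) A1 U'"
       "\<forall>\<rho> x. U' \<rho> = U (insenv k x \<rho>)" using den_subst_none[OF d_ite.hyps(2) True] by blast
    obtain V' where V': "den (downc k \<Gamma>2) (subst v s k) A1 V'"
       "\<forall>\<rho> x. V' \<rho> = V (insenv k x \<rho>)" using den_subst_none[OF d_ite.hyps(3) True] by blast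
    have dj: "dom (downc k \<Gamma>1 ++ \<Delta>) \<inter> dom (downc k \<Gamma>2) = {}"
      using dd d12 unfolding dom_add_disj by auto
    have eq: "(downc k \<Gamma>1 ++ \<Delta>) ++ downc k \<Gamma>2 = downc k (\<Gamma>1 ++ \<Gamma>2) ++ \<Delta>"
      unfolding downc_add using add_swap[of \<Delta> "downc k \<Gamma>2" "downc k \<Gamma>1"] dd(2) by (simp add: Int_commute)
    have den': "den (downc k (\<Gamma>1 ++ \<Gamma>2) ++ \<Delta>) (subst (Ite c u v) s k) A1
        (\<lambda>\<rho>. comb (F1' \<rho> 0) (U' \<rho>) (V' \<rho>))"
      using den.d_ite[OF F1'(1) U'(1) V'(1) dj] eq by simp
    show ?thesis
      by (rule exI[where x="\<lambda>\<rho>. comb (F1' \<rho> 0) (U' \<rho>) (V' \<rho>)"], rule conjI[OF den']) (metis F1'(2) U'(2) V'(2))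
  next
    case False
    then have k2: "\<Gamma>2 k = Some A" using d_ite.prems(1) by (auto simp: map_add_def)
    then have k1: "\<Gamma>1 k = None" using d_ite.hyps(4) unfolding disj_iff by (metis option.distinct(1))
    obtain U' where U': "den (downc k \<Gamma>2 ++ \<Delta>) (subst u s k) A1 U'"
       "\<forall>\<rho>. U' \<rho> = U (insenv k (G \<rho>) \<rho>)" using d_ite.IH(2)[OF k2 d_ite.prems(2) dd(2)] by blast
    obtain V' where V': "den (downc k \<Gamma>2 ++ \<Delta>) (subst v s k) A1 V'"
       "\<forall>\<rho>. V' \<rho> = V (insenv k (G \<rho>) \<rho>)" using d_ite.IH(3)[OF k2 d_ite.prems(2) dd(2)] by blast
    obtain F1' where F1': "den (downc k \<Gamma>1) (subst c s k) TB F1'"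
       "\<forall>\<rho> x. F1' \<rho> = F1 (insenv k x \<rho>)" using den_subst_none[OF d_ite.hyps(1) k1] by blast
    have dj: "dom (downc k \<Gamma>1) \<inter> dom (downc k \<Gamma>2 ++ \<Delta>) = {}"
      using dd d12 by auto
    have eq: "downc k \<Gamma>1 ++ (downc k \<Gamma>2 ++ \<Delta>) = downc k (\<Gamma>1 ++ \<Gamma>2) ++ \<Delta>"
      unfolding downc_add by simp
    have den': "den (downc k (\<Gamma>1 ++ \<Gamma>2) ++ \<Delta>) (subst (Ite c u v) s k) A1
        (\<lambda>\<rho>. comb (F1' \<rho> 0) (U' \<rho>) (V' \<rho>))"
      using den.d_ite[OF F1'(1) U'(1) V'(1) dj] eq by simp
    show ?thesis
      by (rule exI[where x="\<lambda>\<rho>. comb (F1' \<rho> 0) (U' \<rho>) (V' \<rho>)"], rule conjI[OF den']) (metis F1'(2) U'(2) V'(2))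
  qed
qed (auto intro: den.intros)

inductive_cases den_LamE: "den \<Gamma> (Lam t) A F"
inductive_cases den_AppE: "den \<Gamma> (App t r) A F"
inductive_cases den_IteE: "den \<Gamma> (Ite c u v) A F"
inductive_cases den_OneE: "den \<Gamma> One A F"
inductive_cases den_ZeroE: "den \<Gamma> Zero A F"
inductive_cases den_CoinE: "den \<Gamma> Coin A F"

lemma downc0_ext: "downc 0 (ext_ctx A \<Gamma>) = \<Gamma>"
  unfolding downc_def ext_ctx_def by simp

lemma shift_as_upd: "shift a \<rho> = (shift b \<rho>)(0 := a)"
  unfolding shift_def by (auto split: nat.splits)

lemma mkfun_cong: "(\<And>k. k \<le> n \<Longrightarrow> g1 (pt k) = g2 (pt k)) \<Longrightarrow> mkfun n m g1 = mkfun n m g2"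
proof -
  assume h: "\<And>k. k \<le> n \<Longrightarrow> g1 (pt k) = g2 (pt k)"
  have "i div m \<le> n" if "i < Suc n * m" for i
    using that by (metis less_Suc_eq_le less_mult_imp_div_less)
  then show ?thesis unfolding mkfun_def using h by auto
qed

lemma wf_pt: "wf \<Gamma> \<rho> \<Longrightarrow> k \<le> tdim A \<Longrightarrow> wf (ext_ctx A \<Gamma>) (shift (pt k) \<rho>)"
  by (rule wf_shift) (auto intro: sup_pt)

lemma beta_val:
  assumes Fb: "den (ext_ctx A1 \<Gamma>1) b B Fb" and G: "den \<Gamma>2 r A1 G"
    and w1: "wf \<Gamma>1 \<rho>" and w2: "wf \<Gamma>2 \<rho>"
  shows "app (tdim A1) (tdim B) (mkfun (tdim A1) (tdim B) (\<lambda>a. Fb (shift a \<rho>))) (G \<rho>) = Fb (shift (G \<rho>) \<rho>)"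
proof (rule rep[where g="\<lambda>a. Fb (shift a \<rho>)"])
  show "vsup (tdim A1) (G \<rho>)" using den_sup[OF G w2] .
  show "\<forall>x y q. vsup (tdim A1) x \<longrightarrow> vsup (tdim A1) y \<longrightarrow>
      Fb (shift (comb q x y) \<rho>) = comb q (Fb (shift x \<rho>)) (Fb (shift y \<rho>))"
    using den_affine[OF Fb, of "shift (\<lambda>_. 0) \<rho>" 0] shift_as_upd[of _ \<rho> "\<lambda>_. 0"] by metis
  show "\<forall>x. vsup (tdim A1) x \<longrightarrow> vsup (tdim B) (Fb (shift x \<rho>))"
    using den_sup[OF Fb] wf_shift[OF w1] by blast
qed

lemma rstep_shape: "rstep t L \<Longrightarrow> (\<exists>t'. L = [(1,t')]) \<or> (\<exists>t1 t2. L = [(1/2,t1),(1/2,t2)])"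
  by (induction rule: rstep.induct) auto

lemma den_pres: "rstep t L \<Longrightarrow> den \<Gamma> t A F \<Longrightarrow>
 (\<exists>t' F'. L = [(1,t')] \<and> den \<Gamma> t' A F' \<and> (\<forall>\<rho>. wf \<Gamma> \<rho> \<longrightarrow> F' \<rho> = F \<rho>)) \<or>
 (\<exists>t1 t2 F1 F2. L = [(1/2,t1),(1/2,t2)] \<and> den \<Gamma> t1 A F1 \<and> den \<Gamma> t2 A F2 \<and>
     (\<forall>\<rho>. wf \<Gamma> \<rho> \<longrightarrow> F \<rho> = comb (1/2) (F1 \<rho>) (F2 \<rho>)))"
proof (induction arbitrary: \<Gamma> A F rule: rstep.induct)
  case (beta b r)
  from beta obtain \<Gamma>1 \<Gamma>2 A1 Fl G where h: "\<Gamma> = \<Gamma>1 ++ \<Gamma>2" "den \<Gamma>1 (Lam b) (Arr A1 A) Fl"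
    "den \<Gamma>2 r A1 G" "dom \<Gamma>1 \<inter> dom \<Gamma>2 = {}" "F = (\<lambda>\<rho>. app (tdim A1) (tdim A) (Fl \<rho>) (G \<rho>))"
    by (elim den_AppE) blast
  from h(2) obtain Fb where hb: "den (ext_ctx A1 \<Gamma>1) b A Fb"
    "Fl = (\<lambda>\<rho>. mkfun (tdim A1) (tdim A) (\<lambda>a. Fb (shift a \<rho>)))"
    by (elim den_LamE) blast
  have "dom (downc 0 (ext_ctx A1 \<Gamma>1)) \<inter> dom \<Gamma>2 = {}" using h(4) by (simp add: downc0_ext)
  moreover have k0: "ext_ctx A1 \<Gamma>1 0 = Some A1" by (simp add: ext_ctx_def)
  ultimately obtain F' where
    F'0: "den (downc 0 (ext_ctx A1 \<Gamma>1) ++ \<Gamma>2) (subst b r 0) A F'" "\<forall>\<rho>. F' \<rho> = Fb (insenv 0 (G \<rho>) \<rho>)"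
    using den_subst[OF hb(1) k0 h(3)] by blast
  have F': "den (\<Gamma>1 ++ \<Gamma>2) (subst b r 0) A F'" "\<forall>\<rho>. F' \<rho> = Fb (shift (G \<rho>) \<rho>)"
    using F'0 by (simp_all add: downc0_ext insenv0)
  have "\<forall>\<rho>. wf \<Gamma> \<rho> \<longrightarrow> F' \<rho> = F \<rho>"
  proof (intro allI impI)
    fix \<rho> assume "wf \<Gamma> \<rho>"
    then have w: "wf \<Gamma>1 \<rho>" "wf \<Gamma>2 \<rho>" using wf_add[of \<Gamma>1 \<Gamma>2 \<rho>] h(1,4) by simp_all
    show "F' \<rho> = F \<rho>" using beta_val[OF hb(1) h(3) w] F'(2) h(5) hb(2) by simp
  qed
  then show ?case using F'(1) h(1) by (intro disjI1 exI[of _ "subst b r 0"] exI[of _ F']) simp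
next
  case (ifT u v)
  from ifT obtain \<Gamma>1 \<Gamma>2 Fc U V where h: "\<Gamma> = \<Gamma>1 ++ \<Gamma>2" "den \<Gamma>1 One TB Fc" "den \<Gamma>2 u A U"
    "F = (\<lambda>\<rho>. comb (Fc \<rho> 0) (U \<rho>) (V \<rho>))"
    by (elim den_IteE) blast
  from h(2) have "Fc = (\<lambda>\<rho>. bvec 1)" by (elim den_OneE) auto
  then have "F = U" using h(4) by (auto simp: comb_def bvec_def)
  moreover have "den \<Gamma> u A U" using den_weaken[OF h(3) map_le_map_add[of \<Gamma>2 \<Gamma>1]] h(1) by simp
  ultimately show ?case by auto
next
  case (ifF u v)
  from ifF obtain \<Gamma>1 \<Gamma>2 Fc U V where h: "\<Gamma> = \<Gamma>1 ++ \<Gamma>2" "den \<Gamma>1 Zero TB Fc" "den \<Gamma>2 v A V"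
    "F = (\<lambda>\<rho>. comb (Fc \<rho> 0) (U \<rho>) (V \<rho>))"
    by (elim den_IteE) blast
  from h(2) have "Fc = (\<lambda>\<rho>. bvec 0)" by (elim den_ZeroE) auto
  then have "F = V" using h(4) by (auto simp: comb_def bvec_def)
  moreover have "den \<Gamma> v A V" using den_weaken[OF h(3) map_le_map_add[of \<Gamma>2 \<Gamma>1]] h(1) by simp
  ultimately show ?case by auto
next
  case coin
  then have "A = TB" "F = (\<lambda>\<rho>. bvec (1/2))" by (auto elim: den_CoinE)
  moreover have "bvec (1/2) = comb (1/2) (bvec 1) (bvec 0)" by (auto simp: comb_def bvec_def)
  moreover have "den \<Gamma> One TB (\<lambda>\<rho>. bvec 1)" "den \<Gamma> Zero TB (\<lambda>\<rho>. bvec 0)" by (rule den.intros)+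
  ultimately show ?case
    by (intro disjI2 exI[of _ One] exI[of _ Zero] exI[of _ "\<lambda>\<rho>. bvec 1"] exI[of _ "\<lambda>\<rho>. bvec 0"]) auto
next
  case (lam t L)
  from lam.prems obtain A1 B Fb where h: "A = Arr A1 B" "den (ext_ctx A1 \<Gamma>) t B Fb"
    "F = (\<lambda>\<rho>. mkfun (tdim A1) (tdim B) (\<lambda>a. Fb (shift a \<rho>)))"
    by (elim den_LamE) blast
  from lam.IH[OF h(2)] show ?case
  proof (elim disjE exE conjE)
    fix t' F' assume a: "L = [(1, t')]" "den (ext_ctx A1 \<Gamma>) t' B F'"
      "\<forall>\<rho>. wf (ext_ctx A1 \<Gamma>) \<rho> \<longrightarrow> F' \<rho> = Fb \<rho>"
    have "\<forall>\<rho>. wf \<Gamma> \<rho> \<longrightarrow> mkfun (tdim A1) (tdim B) (\<lambda>a. F' (shift a \<rho>)) = F \<rho>"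
      using a(3) wf_pt h(3) by (auto intro!: mkfun_cong)
    then show ?thesis using den.dlam[OF a(2)] a(1) h(1) by auto
  next
    fix t1 t2 F1 F2 assume a: "L = [(1/2, t1), (1/2, t2)]" "den (ext_ctx A1 \<Gamma>) t1 B F1"
      "den (ext_ctx A1 \<Gamma>) t2 B F2"
      "\<forall>\<rho>. wf (ext_ctx A1 \<Gamma>) \<rho> \<longrightarrow> Fb \<rho> = comb (1/2) (F1 \<rho>) (F2 \<rho>)"
    have "\<forall>\<rho>. wf \<Gamma> \<rho> \<longrightarrow> F \<rho> = comb (1/2) (mkfun (tdim A1) (tdim B) (\<lambda>a. F1 (shift a \<rho>)))
        (mkfun (tdim A1) (tdim B) (\<lambda>a. F2 (shift a \<rho>)))"
    proof (intro allI impI)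
      fix \<rho> assume w: "wf \<Gamma> \<rho>"
      have "F \<rho> = mkfun (tdim A1) (tdim B) (\<lambda>a. comb (1/2) (F1 (shift a \<rho>)) (F2 (shift a \<rho>)))"
        unfolding h(3) using a(4) wf_pt[OF w] by (auto intro!: mkfun_cong)
      then show "F \<rho> = comb (1/2) (mkfun (tdim A1) (tdim B) (\<lambda>a. F1 (shift a \<rho>)))
        (mkfun (tdim A1) (tdim B) (\<lambda>a. F2 (shift a \<rho>)))" by (simp add: mkfun_comb)
    qed
    then show ?thesis using den.dlam[OF a(2)] den.dlam[OF a(3)] a(1) h(1) by auto
  qed
next
  case (appL t L r)
  from appL.prems obtain \<Gamma>1 \<Gamma>2 A1 Ft G where h: "\<Gamma> = \<Gamma>1 ++ \<Gamma>2" "den \<Gamma>1 t (Arr A1 A) Ft"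
    "den \<Gamma>2 r A1 G" "dom \<Gamma>1 \<inter> dom \<Gamma>2 = {}" "F = (\<lambda>\<rho>. app (tdim A1) (tdim A) (Ft \<rho>) (G \<rho>))"
    by (elim den_AppE) blast
  have w: "wf \<Gamma> \<rho> \<Longrightarrow> wf \<Gamma>1 \<rho>" for \<rho> using wf_add h(1,4) by blast
  from appL.IH[OF h(2)] show ?case
  proof (elim disjE exE conjE)
    fix t' F' assume a: "L = [(1, t')]" "den \<Gamma>1 t' (Arr A1 A) F'"
      "\<forall>\<rho>. wf \<Gamma>1 \<rho> \<longrightarrow> F' \<rho> = Ft \<rho>"
    show ?thesis using den.dapp[OF a(2) h(3) h(4)] a(1,3) h(1,5) w by auto
  next
    fix t1 t2 F1 F2 assume a: "L = [(1/2, t1), (1/2, t2)]" "den \<Gamma>1 t1 (Arr A1 A) F1"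
      "den \<Gamma>1 t2 (Arr A1 A) F2" "\<forall>\<rho>. wf \<Gamma>1 \<rho> \<longrightarrow> Ft \<rho> = comb (1/2) (F1 \<rho>) (F2 \<rho>)"
    show ?thesis using den.dapp[OF a(2) h(3) h(4)] den.dapp[OF a(3) h(3) h(4)] a(1,4) h(1,5) w
      by (auto simp: app_comb_f)
  qed
next
  case (appR r L t)
  from appR.prems obtain \<Gamma>1 \<Gamma>2 A1 Ft G where h: "\<Gamma> = \<Gamma>1 ++ \<Gamma>2" "den \<Gamma>1 t (Arr A1 A) Ft"
    "den \<Gamma>2 r A1 G" "dom \<Gamma>1 \<inter> dom \<Gamma>2 = {}" "F = (\<lambda>\<rho>. app (tdim A1) (tdim A) (Ft \<rho>) (G \<rho>))"
    by (elim den_AppE) blast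
  have w: "wf \<Gamma> \<rho> \<Longrightarrow> wf \<Gamma>2 \<rho>" for \<rho> using wf_add h(1,4) by blast
  from appR.IH[OF h(3)] show ?case
  proof (elim disjE exE conjE)
    fix t' F' assume a: "L = [(1, t')]" "den \<Gamma>2 t' A1 F'"
      "\<forall>\<rho>. wf \<Gamma>2 \<rho> \<longrightarrow> F' \<rho> = G \<rho>"
    show ?thesis using den.dapp[OF h(2) a(2) h(4)] a(1,3) h(1,5) w by auto
  next
    fix t1 t2 F1 F2 assume a: "L = [(1/2, t1), (1/2, t2)]" "den \<Gamma>2 t1 A1 F1"
      "den \<Gamma>2 t2 A1 F2" "\<forall>\<rho>. wf \<Gamma>2 \<rho> \<longrightarrow> G \<rho> = comb (1/2) (F1 \<rho>) (F2 \<rho>)"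
    show ?thesis using den.dapp[OF h(2) a(2) h(4)] den.dapp[OF h(2) a(3) h(4)] a(1,4) h(1,5) w
      by (auto simp: app_comb_a)
  qed
next
  case (ite1 c L u v)
  from ite1.prems obtain \<Gamma>1 \<Gamma>2 Fc U V where h: "\<Gamma> = \<Gamma>1 ++ \<Gamma>2" "den \<Gamma>1 c TB Fc"
    "den \<Gamma>2 u A U" "den \<Gamma>2 v A V" "dom \<Gamma>1 \<inter> dom \<Gamma>2 = {}" "F = (\<lambda>\<rho>. comb (Fc \<rho> 0) (U \<rho>) (V \<rho>))"
    by (elim den_IteE) blast
  have w: "wf \<Gamma> \<rho> \<Longrightarrow> wf \<Gamma>1 \<rho>" for \<rho> using wf_add h(1,5) by blast
  from ite1.IH[OF h(2)] show ?case
  proof (elim disjE exE conjE)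
    fix t' F' assume a: "L = [(1, t')]" "den \<Gamma>1 t' TB F'"
      "\<forall>\<rho>. wf \<Gamma>1 \<rho> \<longrightarrow> F' \<rho> = Fc \<rho>"
    show ?thesis using den.d_ite[OF a(2) h(3) h(4) h(5)] a(1,3) h(1,6) w by auto
  next
    fix t1 t2 F1 F2 assume a: "L = [(1/2, t1), (1/2, t2)]" "den \<Gamma>1 t1 TB F1"
      "den \<Gamma>1 t2 TB F2" "\<forall>\<rho>. wf \<Gamma>1 \<rho> \<longrightarrow> Fc \<rho> = comb (1/2) (F1 \<rho>) (F2 \<rho>)"
    have "comb (comb (1/2) (F1 \<rho>) (F2 \<rho>) 0) (U \<rho>) (V \<rho>) =
          comb (1/2) (comb (F1 \<rho> 0) (U \<rho>) (V \<rho>)) (comb (F2 \<rho> 0) (U \<rho>) (V \<rho>))" for \<rho>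
      using comb_comb_c[of "1/2" "F1 \<rho> 0" "F2 \<rho> 0" "U \<rho>" "V \<rho>"] by (simp add: comb_def)
    then show ?thesis using den.d_ite[OF a(2) h(3) h(4) h(5)] den.d_ite[OF a(3) h(3) h(4) h(5)] a(1,4) h(1,6) w
      by auto
  qed
next
  case (ite2 u L c v)
  from ite2.prems obtain \<Gamma>1 \<Gamma>2 Fc U V where h: "\<Gamma> = \<Gamma>1 ++ \<Gamma>2" "den \<Gamma>1 c TB Fc"
    "den \<Gamma>2 u A U" "den \<Gamma>2 v A V" "dom \<Gamma>1 \<inter> dom \<Gamma>2 = {}" "F = (\<lambda>\<rho>. comb (Fc \<rho> 0) (U \<rho>) (V \<rho>))"
    by (elim den_IteE) blast
  have w: "wf \<Gamma> \<rho> \<Longrightarrow> wf \<Gamma>2 \<rho>" for \<rho> using wf_add h(1,5) by blast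
  from ite2.IH[OF h(3)] show ?case
  proof (elim disjE exE conjE)
    fix t' F' assume a: "L = [(1, t')]" "den \<Gamma>2 t' A F'"
      "\<forall>\<rho>. wf \<Gamma>2 \<rho> \<longrightarrow> F' \<rho> = U \<rho>"
    show ?thesis using den.d_ite[OF h(2) a(2) h(4) h(5)] a(1,3) h(1,6) w by auto
  next
    fix t1 t2 F1 F2 assume a: "L = [(1/2, t1), (1/2, t2)]" "den \<Gamma>2 t1 A F1"
      "den \<Gamma>2 t2 A F2" "\<forall>\<rho>. wf \<Gamma>2 \<rho> \<longrightarrow> U \<rho> = comb (1/2) (F1 \<rho>) (F2 \<rho>)"
    have "comb (Fc \<rho> 0) (comb (1/2) (F1 \<rho>) (F2 \<rho>)) (V \<rho>) =
          comb (1/2) (comb (Fc \<rho> 0) (F1 \<rho>) (V \<rho>)) (comb (Fc \<rho> 0) (F2 \<rho>) (V \<rho>))" for \<rho>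
      using comb_comb_uv[of "Fc \<rho> 0" "1/2" "F1 \<rho>" "F2 \<rho>" "V \<rho>" "V \<rho>"] by simp
    then show ?thesis using den.d_ite[OF h(2) a(2) h(4) h(5)] den.d_ite[OF h(2) a(3) h(4) h(5)] a(1,4) h(1,6) w
      by auto
  qed
next
  case (ite3 v L c u)
  from ite3.prems obtain \<Gamma>1 \<Gamma>2 Fc U V where h: "\<Gamma> = \<Gamma>1 ++ \<Gamma>2" "den \<Gamma>1 c TB Fc"
    "den \<Gamma>2 u A U" "den \<Gamma>2 v A V" "dom \<Gamma>1 \<inter> dom \<Gamma>2 = {}" "F = (\<lambda>\<rho>. comb (Fc \<rho> 0) (U \<rho>) (V \<rho>))"
    by (elim den_IteE) blast
  have w: "wf \<Gamma> \<rho> \<Longrightarrow> wf \<Gamma>2 \<rho>" for \<rho> using wf_add h(1,5) by blast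
  from ite3.IH[OF h(4)] show ?case
  proof (elim disjE exE conjE)
    fix t' F' assume a: "L = [(1, t')]" "den \<Gamma>2 t' A F'"
      "\<forall>\<rho>. wf \<Gamma>2 \<rho> \<longrightarrow> F' \<rho> = V \<rho>"
    show ?thesis using den.d_ite[OF h(2) h(3) a(2) h(5)] a(1,3) h(1,6) w by auto
  next
    fix t1 t2 F1 F2 assume a: "L = [(1/2, t1), (1/2, t2)]" "den \<Gamma>2 t1 A F1"
      "den \<Gamma>2 t2 A F2" "\<forall>\<rho>. wf \<Gamma>2 \<rho> \<longrightarrow> V \<rho> = comb (1/2) (F1 \<rho>) (F2 \<rho>)"
    have "comb (Fc \<rho> 0) (U \<rho>) (comb (1/2) (F1 \<rho>) (F2 \<rho>)) =
          comb (1/2) (comb (Fc \<rho> 0) (U \<rho>) (F1 \<rho>)) (comb (Fc \<rho> 0) (U \<rho>) (F2 \<rho>))" for \<rho>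
      using comb_comb_uv[of "Fc \<rho> 0" "1/2" "U \<rho>" "U \<rho>" "F1 \<rho>" "F2 \<rho>"] by simp
    then show ?thesis using den.d_ite[OF h(2) h(3) a(2) h(5)] den.d_ite[OF h(2) h(3) a(3) h(5)] a(1,4) h(1,6) w
      by auto
  qed
qed

fun msize :: "tm \<Rightarrow> nat" where
  "msize (Var i) = 1"
| "msize (Lam t) = Suc (msize t)"
| "msize (App t u) = Suc (msize t + msize u)"
| "msize One = 1"
| "msize Zero = 1"
| "msize (Ite c u v) = Suc (msize c + max (msize u) (msize v))"
| "msize Coin = 1"

lemma msize_lift: "msize (lift s k) = msize s"
  by (induction s arbitrary: k) auto

inductive_cases typ_VarE: "typing \<Gamma> (Var i) A"
inductive_cases typ_LamE: "typing \<Gamma> (Lam t) A"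
inductive_cases typ_AppE: "typing \<Gamma> (App t r) A"
inductive_cases typ_IteE: "typing \<Gamma> (Ite c u v) A"
inductive_cases typ_OneArrE: "typing \<Gamma> One (Arr A B)"
inductive_cases typ_ZeroArrE: "typing \<Gamma> Zero (Arr A B)"
inductive_cases typ_LamTBE: "typing \<Gamma> (Lam t) TB"

lemma msize_subst_none: "typing \<Gamma> b B \<Longrightarrow> \<Gamma> k = None \<Longrightarrow> msize (subst b s k) = msize b"
proof (induction arbitrary: k s rule: typing.induct)
  case (tlam A \<Gamma> t B)
  then show ?case by (simp add: ext_ctx_def)
qed (auto simp: add_None)

lemma msize_subst: "typing \<Gamma> b B \<Longrightarrow> msize (subst b s k) \<le> msize b + msize s"
proof (induction arbitrary: k s rule: typing.induct)
  case (tvar \<Gamma> i A)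
  then show ?case by auto
next
  case (tlam A \<Gamma> t B)
  then show ?case using tlam.IH[where k="Suc k" and s="lift s 0"] by (simp add: msize_lift)
next
  case (tapp \<Gamma> t A B \<Delta> r)
  show ?case
  proof (cases "\<Delta> k = None")
    case True
    then show ?thesis using msize_subst_none[OF tapp.hyps(2) True, of s] tapp.IH(1)[where k=k and s=s] by simp
  next
    case False
    then have gk: "\<Gamma> k = None" using tapp.hyps(3) unfolding disj_iff by metis
    show ?thesis using msize_subst_none[OF tapp.hyps(1) gk, of s] tapp.IH(2)[where k=k and s=s] by simp
  qed
next
  case (tite \<Gamma> t \<Delta> u A v)
  show ?case
  proof (cases "\<Delta> k = None")
    case True
    then show ?thesis using msize_subst_none[OF tite.hyps(2) True, of s]
        msize_subst_none[OF tite.hyps(3) True, of s] tite.IH(1)[where k=k and s=s] by simp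
  next
    case False
    then have gk: "\<Gamma> k = None" using tite.hyps(4) unfolding disj_iff by metis
    show ?thesis using msize_subst_none[OF tite.hyps(1) gk, of s] tite.IH(2)[where k=k and s=s] tite.IH(3)[where k=k and s=s]
      by (simp add: max_def)
  qed
qed auto

lemma rstep_msize: "rstep t L \<Longrightarrow> typing \<Gamma> t A \<Longrightarrow> \<forall>x\<in>set L. msize (snd x) \<le> msize t"
proof (induction arbitrary: \<Gamma> A rule: rstep.induct)
  case (beta t r)
  from beta obtain \<Gamma>1 A1 where "typing \<Gamma>1 (Lam t) (Arr A1 A)" by (elim typ_AppE) blast
  then obtain \<Gamma>' B where "typing \<Gamma>' t B" by (elim typ_LamE) blast
  then show ?case using msize_subst[of \<Gamma>' t B r 0] by simp
next
  case (lam t L)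
  from lam.prems obtain \<Gamma>' B where "typing \<Gamma>' t B" by (elim typ_LamE) blast
  then show ?case using lam.IH by fastforce
next
  case (appL t L r)
  from appL.prems obtain \<Gamma>' B where "typing \<Gamma>' t B" by (elim typ_AppE) blast
  then show ?case using appL.IH by fastforce
next
  case (appR r L t)
  from appR.prems obtain \<Gamma>' B where "typing \<Gamma>' r B" by (elim typ_AppE) blast
  then show ?case using appR.IH by fastforce
next
  case (ite1 t L u v)
  from ite1.prems obtain \<Gamma>' B where "typing \<Gamma>' t B" by (elim typ_IteE) blast
  then show ?case using ite1.IH by fastforce
next
  case (ite2 u L t v)
  from ite2.prems obtain \<Gamma>' B where "typing \<Gamma>' u B" by (elim typ_IteE) blast
  then show ?case using ite2.IH by fastforce
next
  case (ite3 v L t u)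
  from ite3.prems obtain \<Gamma>' B where "typing \<Gamma>' v B" by (elim typ_IteE) blast
  then show ?case using ite3.IH by fastforce
qed auto

lemma rstep_typing: "rstep t L \<Longrightarrow> typing \<Gamma> t A \<Longrightarrow> \<forall>x\<in>set L. typing \<Gamma> (snd x) A"
proof -
  assume r: "rstep t L" and ty: "typing \<Gamma> t A"
  from typing_den[OF ty] obtain F where "den \<Gamma> t A F" by blast
  from den_pres[OF r this] show ?thesis by (auto dest: den_typing)
qed

lemma rstep_sum: "rstep t L \<Longrightarrow> sum_list (map fst L) = 1"
  using rstep_shape by fastforce

lemma rstep_ne: "rstep t L \<Longrightarrow> L \<noteq> []"
  using rstep_shape by fastforce

lemma nf_iff: "is_nf t \<longleftrightarrow> (\<forall>L. \<not> rstep t L)"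
  unfolding is_nf_def step_def
  by (metis list.set_intros(1) rstep_ne surj_pair neq_Nil_conv)

inductive_cases rstep_VarE: "rstep (Var i) L"
inductive_cases rstep_OneE: "rstep One L"
inductive_cases rstep_ZeroE: "rstep Zero L"
inductive_cases rstep_LamE: "rstep (Lam t) L"
inductive_cases rstep_AppE: "rstep (App t r) L"
inductive_cases rstep_IteE: "rstep (Ite c u v) L"

lemma nf_Var: "is_nf (Var i)" unfolding nf_iff by (auto elim: rstep_VarE)
lemma nf_One: "is_nf One" unfolding nf_iff by (auto elim: rstep_OneE)
lemma nf_Zero: "is_nf Zero" unfolding nf_iff by (auto elim: rstep_ZeroE)
lemma not_nf_Coin: "\<not> is_nf Coin" unfolding nf_iff using rstep.coin by blast

lemma nf_Lam: "is_nf b \<Longrightarrow> is_nf (Lam b)"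
  unfolding nf_iff by (auto elim: rstep_LamE)

lemma nf_App: "is_nf t \<Longrightarrow> is_nf r \<Longrightarrow> (\<forall>b. t \<noteq> Lam b) \<Longrightarrow> is_nf (App t r)"
  unfolding nf_iff by (auto elim: rstep_AppE)

lemma nf_Ite: "is_nf c \<Longrightarrow> is_nf u \<Longrightarrow> is_nf v \<Longrightarrow> c \<noteq> One \<Longrightarrow> c \<noteq> Zero \<Longrightarrow> is_nf (Ite c u v)"
  unfolding nf_iff by (auto elim: rstep_IteE)

lemma nf_App_inv: "is_nf (App t r) \<Longrightarrow> is_nf t \<and> (\<forall>b. t \<noteq> Lam b)"
  unfolding nf_iff by (metis rstep.appL rstep.beta)

lemma nf_Ite_inv: "is_nf (Ite c u v) \<Longrightarrow> is_nf c \<and> c \<noteq> One \<and> c \<noteq> Zero"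
  unfolding nf_iff by (metis rstep.ite1 rstep.ifT rstep.ifF)

lemma progress: "typing \<Gamma> s A \<Longrightarrow> \<Gamma> = Map.empty \<Longrightarrow> is_nf s \<Longrightarrow> s = One \<or> s = Zero \<or> (\<exists>b. s = Lam b)"
proof (induction rule: typing.induct)
  case (tvar \<Gamma> i A)
  then show ?case by simp
next
  case (tapp \<Gamma> t A B \<Delta> r)
  have e: "\<Gamma> = Map.empty" using tapp.prems(1) by (metis map_add_None)
  from nf_App_inv[OF tapp.prems(2)] have "is_nf t" "\<forall>b. t \<noteq> Lam b" by auto
  with tapp.IH(1)[OF e] have "t = One \<or> t = Zero" by auto
  then show ?case using tapp.hyps(1) by (auto elim: typ_OneArrE typ_ZeroArrE)
next
  case (tite \<Gamma> t \<Delta> u A v)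
  have e: "\<Gamma> = Map.empty" using tite.prems(1) by (metis map_add_None)
  from nf_Ite_inv[OF tite.prems(2)] have "is_nf t" "t \<noteq> One" "t \<noteq> Zero" by auto
  with tite.IH(1)[OF e] obtain b where "t = Lam b" by auto
  then show ?case using tite.hyps(1) by (auto elim: typ_LamTBE)
next
  case (tcoin \<Gamma>)
  then show ?case using not_nf_Coin by simp
qed auto

lemma closed_nf_TB: "typing Map.empty s TB \<Longrightarrow> is_nf s \<Longrightarrow> s = One \<or> s = Zero"
  using progress[of Map.empty s TB] by (auto elim: typ_LamTBE)

lemma dstep_ctx:
  assumes C: "\<And>t L. rstep t L \<Longrightarrow> rstep (C t) (map (apsnd C) L)"
  shows "dstep D D' \<Longrightarrow> dstep (map (apsnd C) D) (map (apsnd C) D')"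
proof -
  assume "dstep D D'"
  then obtain xs ys p t L where h: "D = xs @ (p, t) # ys" "rstep t L"
    "D' = xs @ map (\<lambda>(q, t'). (p * q, t')) L @ ys" unfolding dstep_def by blast
  have "map (apsnd C) D' = map (apsnd C) xs @ map (\<lambda>(q, t'). (p * q, t')) (map (apsnd C) L) @ map (apsnd C) ys"
    unfolding h(3) by (auto simp: case_prod_beta)
  moreover have "map (apsnd C) D = map (apsnd C) xs @ (p, C t) # map (apsnd C) ys" using h(1) by simp
  ultimately show ?thesis unfolding dstep_def using C[OF h(2)] by blast
qed

lemma dsteps_ctx:
  assumes C: "\<And>t L. rstep t L \<Longrightarrow> rstep (C t) (map (apsnd C) L)"
  shows "dstep\<^sup>*\<^sup>* D D' \<Longrightarrow> dstep\<^sup>*\<^sup>* (map (apsnd C) D) (map (apsnd C) D')"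
  by (induction rule: rtranclp_induct) (auto intro: rtranclp.rtrancl_into_rtrancl dstep_ctx[OF C])

lemma dstep_append: "dstep D D' \<Longrightarrow> dstep (xs @ D @ ys) (xs @ D' @ ys)"
  unfolding dstep_def by (metis append.assoc append_Cons)

lemma dsteps_append: "dstep\<^sup>*\<^sup>* D D' \<Longrightarrow> dstep\<^sup>*\<^sup>* (xs @ D @ ys) (xs @ D' @ ys)"
  by (induction rule: rtranclp_induct) (auto intro: rtranclp.rtrancl_into_rtrancl dstep_append)

definition scale :: "real \<Rightarrow> dist \<Rightarrow> dist" where
  "scale c D = map (\<lambda>(p, t). (c * p, t)) D"

lemma dstep_scale: "dstep D D' \<Longrightarrow> dstep (scale c D) (scale c D')"
proof -
  assume "dstep D D'"
  then obtain xs ys p t L where h: "D = xs @ (p, t) # ys" "rstep t L"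
    "D' = xs @ map (\<lambda>(q, t'). (p * q, t')) L @ ys" unfolding dstep_def by blast
  have "scale c D' = scale c xs @ map (\<lambda>(q, t'). (c * p * q, t')) L @ scale c ys"
    unfolding h(3) scale_def by (auto simp: case_prod_beta mult.assoc)
  moreover have "scale c D = scale c xs @ (c * p, t) # scale c ys" using h(1) by (simp add: scale_def)
  ultimately show ?thesis unfolding dstep_def using h(2) by blast
qed

lemma dsteps_scale: "dstep\<^sup>*\<^sup>* D D' \<Longrightarrow> dstep\<^sup>*\<^sup>* (scale c D) (scale c D')"
  by (induction rule: rtranclp_induct) (auto intro: rtranclp.rtrancl_into_rtrancl dstep_scale)

lemma dsteps_bind:
  "(\<forall>x\<in>set D. \<exists>E. dstep\<^sup>*\<^sup>* [(1, snd x)] E \<and> (\<forall>y\<in>set E. Q (snd y))) \<Longrightarrow>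
   \<exists>E. dstep\<^sup>*\<^sup>* D E \<and> (\<forall>y\<in>set E. Q (snd y))"
proof (induction D)
  case Nil
  then show ?case by auto
next
  case (Cons x D)
  obtain p t where x: "x = (p, t)" by fastforce
  from Cons.prems x obtain E1 where E1: "dstep\<^sup>*\<^sup>* [(1, t)] E1" "\<forall>y\<in>set E1. Q (snd y)" by auto
  from Cons obtain E2 where E2: "dstep\<^sup>*\<^sup>* D E2" "\<forall>y\<in>set E2. Q (snd y)" by auto
  have "dstep\<^sup>*\<^sup>* (scale p [(1, t)]) (scale p E1)" by (rule dsteps_scale[OF E1(1)])
  then have s1: "dstep\<^sup>*\<^sup>* [(p, t)] (scale p E1)" by (simp add: scale_def)
  have "dstep\<^sup>*\<^sup>* ([] @ [(p, t)] @ D) ([] @ scale p E1 @ D)" by (rule dsteps_append[OF s1])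
  moreover have "dstep\<^sup>*\<^sup>* (scale p E1 @ D @ []) (scale p E1 @ E2 @ [])" by (rule dsteps_append[OF E2(1)])
  ultimately have "dstep\<^sup>*\<^sup>* ((p, t) # D) (scale p E1 @ E2)" by simp
  moreover have "\<forall>y\<in>set (scale p E1 @ E2). Q (snd y)" using E1(2) E2(2) by (auto simp: scale_def)
  ultimately show ?case using x by blast
qed

lemma dstep_single: "rstep t L \<Longrightarrow> dstep [(1, t)] L"
  unfolding dstep_def by (rule exI[of _ "[]"], rule exI[of _ "[]"]) (auto simp: case_prod_beta)

lemma plug_rstep: "rstep t L \<Longrightarrow> rstep (plug t vs) (map (apsnd (\<lambda>x. plug x vs)) L)"
proof (induction vs arbitrary: t L)
  case Nil
  then show ?case by (simp add: plug_def apsnd_def map_prod_def case_prod_beta)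
next
  case (Cons v vs)
  have "rstep (App t v) (map (apsnd (\<lambda>x. App x v)) L)" using Cons.prems by (rule rstep.appL)
  from Cons.IH[OF this] show ?case by (simp add: plug_def comp_def apsnd_def map_prod_def case_prod_beta)
qed

lemma reach_inv: "dstep\<^sup>*\<^sup>* D E \<Longrightarrow> (\<forall>x\<in>set D. typing \<Gamma> (snd x) A \<and> msize (snd x) \<le> m) \<Longrightarrow>
   (\<forall>x\<in>set E. typing \<Gamma> (snd x) A \<and> msize (snd x) \<le> m)"
proof (induction rule: rtranclp_induct)
  case base
  then show ?case by simp
next
  case (step D' E')
  then have IH: "\<forall>x\<in>set D'. typing \<Gamma> (snd x) A \<and> msize (snd x) \<le> m" by blast
  from step.hyps(2) obtain xs ys p t L where h: "D' = xs @ (p, t) # ys" "rstep t L"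
    "E' = xs @ map (\<lambda>(q, t'). (p * q, t')) L @ ys" unfolding dstep_def by blast
  have t: "typing \<Gamma> t A" "msize t \<le> m" using IH h(1) by auto
  have "\<forall>x\<in>set L. typing \<Gamma> (snd x) A \<and> msize (snd x) \<le> m"
    using rstep_typing[OF h(2) t(1)] rstep_msize[OF h(2) t(1)] t(2) by force
  then show ?case using IH h by (force simp: case_prod_beta)
qed

lemma reach_inv1: "dstep\<^sup>*\<^sup>* [(1, t)] E \<Longrightarrow> typing \<Gamma> t A \<Longrightarrow>
   (\<forall>x\<in>set E. typing \<Gamma> (snd x) A \<and> msize (snd x) \<le> msize t)"
  using reach_inv[of "[(1, t)]" E \<Gamma> A "msize t"] by auto

lemma set_map_apsnd: "(\<forall>x\<in>set (map (apsnd C) E). P x) \<longleftrightarrow> (\<forall>y\<in>set E. P (fst y, C (snd y)))"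
  by (auto simp: apsnd_def map_prod_def case_prod_beta)

lemma wn: "typing \<Gamma> t A \<Longrightarrow> \<exists>E. dstep\<^sup>*\<^sup>* [(1, t)] E \<and> (\<forall>x\<in>set E. is_nf (snd x))"
proof (induction "msize t" arbitrary: t \<Gamma> A rule: less_induct)
  case less
  show ?case
  proof (cases t)
    case (Var i)
    then show ?thesis using nf_Var by (intro exI[of _ "[(1, t)]"]) auto
  next
    case One
    then show ?thesis using nf_One by (intro exI[of _ "[(1, t)]"]) auto
  next
    case Zero
    then show ?thesis using nf_Zero by (intro exI[of _ "[(1, t)]"]) auto
  next
    case Coin
    have "dstep [(1, Coin)] [(1/2, One), (1/2, Zero)]" by (rule dstep_single[OF rstep.coin])
    then show ?thesis using Coin nf_One nf_Zero
      by (intro exI[of _ "[(1/2, One), (1/2, Zero)]"]) auto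
  next
    case (Lam b)
    from less.prems Lam obtain A1 B where "typing (ext_ctx A1 \<Gamma>) b B" by (auto elim: typ_LamE)
    from less.hyps[OF _ this] Lam obtain Eb where Eb: "dstep\<^sup>*\<^sup>* [(1, b)] Eb" "\<forall>x\<in>set Eb. is_nf (snd x)"
      by auto
    have "dstep\<^sup>*\<^sup>* (map (apsnd Lam) [(1, b)]) (map (apsnd Lam) Eb)"
      by (rule dsteps_ctx[OF _ Eb(1)]) (rule rstep.lam)
    then show ?thesis using Lam Eb(2) nf_Lam by (intro exI[of _ "map (apsnd Lam) Eb"]) auto
  next
    case (App t1 r1)
    from less.prems App obtain \<Gamma>1 \<Gamma>2 A1 where ty: "\<Gamma> = \<Gamma>1 ++ \<Gamma>2" "typing \<Gamma>1 t1 (Arr A1 A)"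
      "typing \<Gamma>2 r1 A1" "dom \<Gamma>1 \<inter> dom \<Gamma>2 = {}" by (auto elim: typ_AppE)
    from less.hyps[OF _ ty(2)] App obtain E1 where E1: "dstep\<^sup>*\<^sup>* [(1, t1)] E1" "\<forall>x\<in>set E1. is_nf (snd x)"
      by auto
    from less.hyps[OF _ ty(3)] App obtain E2 where E2: "dstep\<^sup>*\<^sup>* [(1, r1)] E2" "\<forall>x\<in>set E2. is_nf (snd x)"
      by auto
    note R1 = reach_inv1[OF E1(1) ty(2)]
    note R2 = reach_inv1[OF E2(1) ty(3)]
    have fin: "\<exists>E. dstep\<^sup>*\<^sup>* [(1, App t' r')] E \<and> (\<forall>x\<in>set E. is_nf (snd x))"
      if t': "typing \<Gamma>1 t' (Arr A1 A)" "msize t' \<le> msize t1" "is_nf t'"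
      and r': "typing \<Gamma>2 r' A1" "msize r' \<le> msize r1" "is_nf r'" for t' r'
    proof (cases "\<exists>b. t' = Lam b")
      case True
      then obtain b where b: "t' = Lam b" by blast
      have tyA: "typing \<Gamma> (App t' r') A" using typing.tapp[OF t'(1) r'(1) ty(4)] ty(1) by simp
      have st: "dstep [(1, App t' r')] [(1, subst b r' 0)]" using dstep_single[OF rstep.beta] b by simp
      have tys: "typing \<Gamma> (subst b r' 0) A"
        using rstep_typing[OF rstep.beta tyA[unfolded b]] by simp
      from t'(1) b obtain \<Gamma>' B' where "typing \<Gamma>' b B'" by (auto elim: typ_LamE)
      then have "msize (subst b r' 0) \<le> msize b + msize r'" by (rule msize_subst)
      then have "msize (subst b r' 0) < msize t" using App b t'(2) r'(2) by simp
      from less.hyps[OF this tys] obtain E where E: "dstep\<^sup>*\<^sup>* [(1, subst b r' 0)] E"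
        "\<forall>x\<in>set E. is_nf (snd x)" by blast
      then show ?thesis using st by (meson converse_rtranclp_into_rtranclp)
    next
      case False
      then show ?thesis using nf_App[OF t'(3) r'(3)] by (intro exI[of _ "[(1, App t' r')]"]) auto
    qed
    have mid: "\<exists>E. dstep\<^sup>*\<^sup>* [(1, App t' r1)] E \<and> (\<forall>x\<in>set E. is_nf (snd x))"
      if t': "typing \<Gamma>1 t' (Arr A1 A)" "msize t' \<le> msize t1" "is_nf t'" for t'
    proof -
      have s: "dstep\<^sup>*\<^sup>* (map (apsnd (App t')) [(1, r1)]) (map (apsnd (App t')) E2)"
        by (rule dsteps_ctx[OF _ E2(1)]) (rule rstep.appR)
      have "\<forall>y\<in>set (map (apsnd (App t')) E2). \<exists>E. dstep\<^sup>*\<^sup>* [(1, snd y)] E \<and> (\<forall>x\<in>set E. is_nf (snd x))"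
        unfolding set_map_apsnd using fin[OF t'] R2 E2(2) by auto
      from dsteps_bind[OF this] obtain E where "dstep\<^sup>*\<^sup>* (map (apsnd (App t')) E2) E"
        "\<forall>x\<in>set E. is_nf (snd x)" by blast
      then show ?thesis using s by (auto intro: rtranclp_trans)
    qed
    have s: "dstep\<^sup>*\<^sup>* (map (apsnd (\<lambda>x. App x r1)) [(1, t1)]) (map (apsnd (\<lambda>x. App x r1)) E1)"
      by (rule dsteps_ctx[OF _ E1(1)]) (rule rstep.appL)
    have "\<forall>y\<in>set (map (apsnd (\<lambda>x. App x r1)) E1). \<exists>E. dstep\<^sup>*\<^sup>* [(1, snd y)] E \<and> (\<forall>x\<in>set E. is_nf (snd x))"
      unfolding set_map_apsnd using mid R1 E1(2) by auto
    from dsteps_bind[OF this] obtain E where "dstep\<^sup>*\<^sup>* (map (apsnd (\<lambda>x. App x r1)) E1) E"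
      "\<forall>x\<in>set E. is_nf (snd x)" by blast
    then show ?thesis using s App by (auto intro: rtranclp_trans)
  next
    case (Ite c u v)
    from less.prems Ite obtain \<Gamma>1 \<Gamma>2 where ty: "typing \<Gamma>1 c TB" "typing \<Gamma>2 u A" "typing \<Gamma>2 v A"
      by (auto elim: typ_IteE)
    from less.hyps[OF _ ty(1)] Ite obtain Ec where Ec: "dstep\<^sup>*\<^sup>* [(1, c)] Ec" "\<forall>x\<in>set Ec. is_nf (snd x)"
      by auto
    have mu: "msize u < msize t" "msize v < msize t" using Ite by auto
    from less.hyps[OF mu(1) ty(2)] obtain Eu where Eu: "dstep\<^sup>*\<^sup>* [(1, u)] Eu" "\<forall>x\<in>set Eu. is_nf (snd x)"
      by blast
    from less.hyps[OF mu(2) ty(3)] obtain Ev where Ev: "dstep\<^sup>*\<^sup>* [(1, v)] Ev" "\<forall>x\<in>set Ev. is_nf (snd x)"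
      by blast
    have fin: "\<exists>E. dstep\<^sup>*\<^sup>* [(1, Ite c' u' v')] E \<and> (\<forall>x\<in>set E. is_nf (snd x))"
      if "is_nf c'" "is_nf u'" "is_nf v'" for c' u' v'
    proof -
      consider "c' = One" | "c' = Zero" | "c' \<noteq> One \<and> c' \<noteq> Zero" by blast
      then show ?thesis
      proof cases
        case 1
        have "dstep [(1, Ite c' u' v')] [(1, u')]" using dstep_single[OF rstep.ifT] 1 by simp
        then show ?thesis using that by (intro exI[of _ "[(1, u')]"]) auto
      next
        case 2
        have "dstep [(1, Ite c' u' v')] [(1, v')]" using dstep_single[OF rstep.ifF] 2 by simp
        then show ?thesis using that by (intro exI[of _ "[(1, v')]"]) auto
      next
        case 3
        then show ?thesis using nf_Ite[OF that] by (intro exI[of _ "[(1, Ite c' u' v')]"]) auto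
      qed
    qed
    have mid2: "\<exists>E. dstep\<^sup>*\<^sup>* [(1, Ite c' u' v)] E \<and> (\<forall>x\<in>set E. is_nf (snd x))"
      if "is_nf c'" "is_nf u'" for c' u'
    proof -
      have s: "dstep\<^sup>*\<^sup>* (map (apsnd (Ite c' u')) [(1, v)]) (map (apsnd (Ite c' u')) Ev)"
        by (rule dsteps_ctx[OF _ Ev(1)]) (rule rstep.ite3)
      have "\<forall>y\<in>set (map (apsnd (Ite c' u')) Ev). \<exists>E. dstep\<^sup>*\<^sup>* [(1, snd y)] E \<and> (\<forall>x\<in>set E. is_nf (snd x))"
        unfolding set_map_apsnd using fin that Ev(2) by auto
      from dsteps_bind[OF this] obtain E where "dstep\<^sup>*\<^sup>* (map (apsnd (Ite c' u')) Ev) E"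
        "\<forall>x\<in>set E. is_nf (snd x)" by blast
      then show ?thesis using s by (auto intro: rtranclp_trans)
    qed
    have mid1: "\<exists>E. dstep\<^sup>*\<^sup>* [(1, Ite c' u v)] E \<and> (\<forall>x\<in>set E. is_nf (snd x))"
      if "is_nf c'" for c'
    proof -
      have s: "dstep\<^sup>*\<^sup>* (map (apsnd (\<lambda>x. Ite c' x v)) [(1, u)]) (map (apsnd (\<lambda>x. Ite c' x v)) Eu)"
        by (rule dsteps_ctx[OF _ Eu(1)]) (rule rstep.ite2)
      have "\<forall>y\<in>set (map (apsnd (\<lambda>x. Ite c' x v)) Eu). \<exists>E. dstep\<^sup>*\<^sup>* [(1, snd y)] E \<and> (\<forall>x\<in>set E. is_nf (snd x))"
        unfolding set_map_apsnd using mid2 that Eu(2) by auto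
      from dsteps_bind[OF this] obtain E where "dstep\<^sup>*\<^sup>* (map (apsnd (\<lambda>x. Ite c' x v)) Eu) E"
        "\<forall>x\<in>set E. is_nf (snd x)" by blast
      then show ?thesis using s by (auto intro: rtranclp_trans)
    qed
    have s: "dstep\<^sup>*\<^sup>* (map (apsnd (\<lambda>x. Ite x u v)) [(1, c)]) (map (apsnd (\<lambda>x. Ite x u v)) Ec)"
      by (rule dsteps_ctx[OF _ Ec(1)]) (rule rstep.ite1)
    have "\<forall>y\<in>set (map (apsnd (\<lambda>x. Ite x u v)) Ec). \<exists>E. dstep\<^sup>*\<^sup>* [(1, snd y)] E \<and> (\<forall>x\<in>set E. is_nf (snd x))"
      unfolding set_map_apsnd using mid1 Ec(2) by auto
    from dsteps_bind[OF this] obtain E where "dstep\<^sup>*\<^sup>* (map (apsnd (\<lambda>x. Ite x u v)) Ec) E"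
      "\<forall>x\<in>set E. is_nf (snd x)" by blast
    then show ?thesis using s Ite by (auto intro: rtranclp_trans)
  qed
qed

definition semval :: "tm \<Rightarrow> real \<Rightarrow> bool" where
  "semval s w \<longleftrightarrow> (\<exists>F. den Map.empty s TB F \<and> w = F (\<lambda>_ _. 0) 0)"

definition wsum :: "dist \<Rightarrow> real list \<Rightarrow> real" where
  "wsum D ws = sum_list (map2 (\<lambda>x w. fst x * w) D ws)"

definition msum :: "dist \<Rightarrow> real" where
  "msum D = sum_list (map fst D)"

definition cnt :: "tm \<Rightarrow> dist \<Rightarrow> real" where
  "cnt s D = sum_list (map fst (filter (\<lambda>x. snd x = s) D))"

definition inv :: "dist \<Rightarrow> real \<Rightarrow> bool" where
  "inv D v \<longleftrightarrow> (\<exists>ws. list_all2 (\<lambda>x w. semval (snd x) w) D ws \<and> v = wsum D ws)"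

lemma wf_empty: "wf Map.empty \<rho>"
  by (simp add: wf_def)

lemma semval_step: "rstep s L \<Longrightarrow> semval s w \<Longrightarrow>
  \<exists>ws. list_all2 (\<lambda>x w. semval (snd x) w) L ws \<and> w = wsum L ws"
proof -
  assume r: "rstep s L" and "semval s w"
  then obtain F where F: "den Map.empty s TB F" "w = F (\<lambda>_ _. 0) 0" unfolding semval_def by blast
  from den_pres[OF r F(1)] show ?thesis
  proof (elim disjE exE conjE)
    fix t' F' assume a: "L = [(1, t')]" "den Map.empty t' TB F'" "\<forall>\<rho>. wf Map.empty \<rho> \<longrightarrow> F' \<rho> = F \<rho>"
    show ?thesis using a F(2) wf_empty
      by (intro exI[of _ "[w]"]) (auto simp: semval_def wsum_def)
  next
    fix t1 t2 F1 F2 assume a: "L = [(1/2, t1), (1/2, t2)]" "den Map.empty t1 TB F1" "den Map.empty t2 TB F2"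
      "\<forall>\<rho>. wf Map.empty \<rho> \<longrightarrow> F \<rho> = comb (1/2) (F1 \<rho>) (F2 \<rho>)"
    show ?thesis using a F(2) wf_empty
      by (intro exI[of _ "[F1 (\<lambda>_ _. 0) 0, F2 (\<lambda>_ _. 0) 0]"]) (auto simp: semval_def wsum_def comb_def)
  qed
qed

lemma wsum_append: "length xs = length us \<Longrightarrow> wsum (xs @ ys) (us @ vs) = wsum xs us + wsum ys vs"
  by (simp add: wsum_def)

lemma wsum_Cons: "wsum (x # xs) (u # us) = fst x * u + wsum xs us"
  by (simp add: wsum_def)

lemma wsum_scale: "length L = length ws \<Longrightarrow>
  wsum (map (\<lambda>(q, t'). (p * q, t')) L) ws = p * wsum L ws"
  by (induction L ws rule: list_induct2) (auto simp: wsum_def case_prod_beta algebra_simps)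

lemma inv_step: "dstep D D' \<Longrightarrow> inv D v \<Longrightarrow> inv D' v"
proof -
  assume "dstep D D'" "inv D v"
  then obtain xs ys p t L where h: "D = xs @ (p, t) # ys" "rstep t L"
    "D' = xs @ map (\<lambda>(q, t'). (p * q, t')) L @ ys" unfolding dstep_def by blast
  let ?P = "\<lambda>x w. semval (snd x) w"
  from \<open>inv D v\<close> obtain ws where ws: "list_all2 ?P D ws" "v = wsum D ws" unfolding inv_def by blast
  from ws(1) h(1) obtain ws1 ws' where a: "ws = ws1 @ ws'" "list_all2 ?P xs ws1" "list_all2 ?P ((p, t) # ys) ws'"
    by (auto simp: list_all2_append1)
  from a(3) obtain w ws2 where b: "ws' = w # ws2" "semval t w" "list_all2 ?P ys ws2"
    by (auto simp: list_all2_Cons1)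
  from semval_step[OF h(2) b(2)] obtain wL where c: "list_all2 ?P L wL" "w = wsum L wL" by blast
  have c': "list_all2 ?P (map (\<lambda>(q, t'). (p * q, t')) L) wL"
    using c(1) by (auto simp: list_all2_map1 case_prod_beta elim: list_all2_mono)
  have l1: "length xs = length ws1" using a(2) list_all2_lengthD by blast
  have l2: "length L = length wL" using c(1) list_all2_lengthD by blast
  have "list_all2 ?P D' (ws1 @ wL @ ws2)" using h(3) a(2) c' b(3) by (simp add: list_all2_appendI)
  moreover have "wsum D' (ws1 @ wL @ ws2) = v"
  proof -
    have "wsum D' (ws1 @ wL @ ws2) = wsum xs ws1 + (p * wsum L wL + wsum ys ws2)"
      unfolding h(3) using l1 l2 by (simp add: wsum_append wsum_scale)
    moreover have "v = wsum xs ws1 + (p * w + wsum ys ws2)"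
      using ws(2) h(1) a(1) b(1) l1 by (simp add: wsum_append wsum_Cons)
    ultimately show ?thesis using c(2) by simp
  qed
  ultimately show ?thesis unfolding inv_def by blast
qed

lemma inv_steps: "dstep\<^sup>*\<^sup>* D D' \<Longrightarrow> inv D v \<Longrightarrow> inv D' v"
  by (induction rule: rtranclp_induct) (auto intro: inv_step)

lemma msum_step: "dstep D D' \<Longrightarrow> msum D' = msum D"
proof -
  assume "dstep D D'"
  then obtain xs ys p t L where h: "D = xs @ (p, t) # ys" "rstep t L"
    "D' = xs @ map (\<lambda>(q, t'). (p * q, t')) L @ ys" unfolding dstep_def by blast
  have "sum_list (map fst (map (\<lambda>(q, t'). (p * q, t')) L)) = p * sum_list (map fst L)"
    by (induction L) (auto simp: case_prod_beta algebra_simps)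
  then show ?thesis using h rstep_sum[OF h(2)] by (simp add: msum_def)
qed

lemma msum_steps: "dstep\<^sup>*\<^sup>* D D' \<Longrightarrow> msum D' = msum D"
  by (induction rule: rtranclp_induct) (auto dest: msum_step)

lemma semval_One: "semval One w \<Longrightarrow> w = 1"
  unfolding semval_def by (auto elim: den_OneE simp: bvec_def)

lemma semval_Zero: "semval Zero w \<Longrightarrow> w = 0"
  unfolding semval_def by (auto elim: den_ZeroE simp: bvec_def)

lemma wsum_cnt: "list_all2 (\<lambda>x w. semval (snd x) w) E ws \<Longrightarrow> (\<forall>x\<in>set E. snd x = One \<or> snd x = Zero) \<Longrightarrow>
   wsum E ws = cnt One E"
proof (induction rule: list_all2_induct)
  case Nil
  then show ?case by (simp add: wsum_def cnt_def)
next
  case (Cons x xs w ws)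
  then show ?case using semval_One semval_Zero
    by (auto simp: wsum_Cons cnt_def)
qed

lemma msum_cnt: "(\<forall>x\<in>set E. snd x = One \<or> snd x = Zero) \<Longrightarrow> msum E = cnt One E + cnt Zero E"
  by (induction E) (auto simp: msum_def cnt_def)

lemma cnt_other: "(\<forall>x\<in>set E. snd x = One \<or> snd x = Zero) \<Longrightarrow> s \<noteq> One \<Longrightarrow> s \<noteq> Zero \<Longrightarrow> cnt s E = 0"
proof -
  assume a: "\<forall>x\<in>set E. snd x = One \<or> snd x = Zero" "s \<noteq> One" "s \<noteq> Zero"
  then have "filter (\<lambda>x. snd x = s) E = []" by (auto simp: filter_empty_conv)
  then show ?thesis by (simp add: cnt_def)
qed

lemma nf_dist:
  assumes E: "dstep\<^sup>*\<^sup>* [(1, s)] E" and ty: "typing Map.empty s TB" and sv: "semval s w"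
    and nf: "\<forall>x\<in>set E. is_nf (snd x)"
  shows "cnt One E = w \<and> cnt Zero E = 1 - w \<and> (\<forall>s'. s' \<noteq> One \<longrightarrow> s' \<noteq> Zero \<longrightarrow> cnt s' E = 0)"
proof -
  have oz: "\<forall>x\<in>set E. snd x = One \<or> snd x = Zero"
    using reach_inv1[OF E ty] nf closed_nf_TB by blast
  have "inv [(1, s)] w" unfolding inv_def using sv by (intro exI[of _ "[w]"]) (auto simp: wsum_def)
  from inv_steps[OF E this] obtain ws where ws: "list_all2 (\<lambda>x w. semval (snd x) w) E ws" "w = wsum E ws"
    unfolding inv_def by blast
  have w: "cnt One E = w" using wsum_cnt[OF ws(1) oz] ws(2) by simp
  have "msum E = 1" using msum_steps[OF E] by (simp add: msum_def)
  then have "cnt Zero E = 1 - w" using msum_cnt[OF oz] w by simp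
  then show ?thesis using w cnt_other[OF oz] by blast
qed

lemma cnt_append: "cnt s (xs @ ys) = cnt s xs + cnt s ys"
  by (simp add: cnt_def)

lemma cnt_scale: "cnt s (map (\<lambda>(u, b). (p * u, b)) E) = p * cnt s E"
  by (induction E) (auto simp: cnt_def case_prod_beta algebra_simps)

lemma cnt_weighted: "length Es = length D \<Longrightarrow>
   cnt s (weighted D Es) = sum_list (map2 (\<lambda>x E. fst x * cnt s E) D Es)"
proof (induction D Es rule: list_induct2')
  case (4 x xs y ys)
  then show ?case by (cases x) (simp add: weighted_def cnt_append cnt_scale)
qed (auto simp: weighted_def cnt_def)

lemma map2_cong_nth: "length xs = length ys \<Longrightarrow> length xs = length zs \<Longrightarrow>
   (\<And>i. i < length xs \<Longrightarrow> f (xs ! i) (ys ! i) = g (xs ! i) (zs ! i)) \<Longrightarrow>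
   map2 f xs ys = map2 g xs zs"
  by (rule nth_equalityI) auto

lemma sum_list_zero: "(\<forall>x\<in>set xs. f x = 0) \<Longrightarrow> sum_list (map f xs) = (0::real)"
  by (induction xs) auto

lemma sum_one_minus: "length D = length ws \<Longrightarrow>
   sum_list (map2 (\<lambda>x w. fst x * (1 - w)) D ws) = msum D - wsum D ws"
  by (induction D ws rule: list_induct2) (auto simp: msum_def wsum_def algebra_simps)

lemma good:
  assumes red: "reduces_to t D" and ty: "typing Map.empty t A" and ec: "elim_ctx A vs"
    and sv: "semval (plug t vs) v"
  shows "\<exists>E. length E = length D \<and>
     (\<forall>i<length D. reduces_to (plug (snd (D ! i)) vs) (E ! i) \<and> (\<forall>x\<in>set (E ! i). is_nf (snd x))) \<and>
     (\<forall>s. cnt s (weighted D E) = (if s = One then v else if s = Zero then 1 - v else 0))"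
proof -
  let ?C = "\<lambda>x. plug x vs"
  have r: "dstep\<^sup>*\<^sup>* [(1, t)] D" using red unfolding reduces_to_def .
  have "dstep\<^sup>*\<^sup>* (map (apsnd ?C) [(1, t)]) (map (apsnd ?C) D)"
    by (rule dsteps_ctx[OF _ r]) (rule plug_rstep)
  then have rp: "dstep\<^sup>*\<^sup>* [(1, plug t vs)] (map (apsnd ?C) D)" by simp
  have "inv [(1, plug t vs)] v" unfolding inv_def using sv by (intro exI[of _ "[v]"]) (auto simp: wsum_def)
  from inv_steps[OF rp this] obtain ws where ws: "list_all2 (\<lambda>x w. semval (snd x) w) (map (apsnd ?C) D) ws"
    "v = wsum (map (apsnd ?C) D) ws" unfolding inv_def by blast
  have len: "length ws = length D" using list_all2_lengthD[OF ws(1)] by simp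
  have svi: "semval (plug (snd (D ! i)) vs) (ws ! i)" if "i < length D" for i
    using list_all2_nthD[OF ws(1)] that by (simp add: apsnd_def map_prod_def case_prod_beta)
  have v: "v = wsum D ws"
    using ws(2) len by (simp add: wsum_def apsnd_def map_prod_def zip_map1 comp_def split_def)
  have mD: "msum D = 1" using msum_steps[OF r] by (simp add: msum_def)
  have tyD: "typing Map.empty (snd (D ! i)) A" if "i < length D" for i
    using reach_inv1[OF r ty] that by auto
  define Q where "Q = (\<lambda>i E. reduces_to (plug (snd (D ! i)) vs) E \<and> (\<forall>x\<in>set E. is_nf (snd x)) \<and>
      cnt One E = ws ! i \<and> cnt Zero E = 1 - ws ! i \<and> (\<forall>s'. s' \<noteq> One \<longrightarrow> s' \<noteq> Zero \<longrightarrow> cnt s' E = 0))"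
  have exQ: "\<exists>E. Q i E" if i: "i < length D" for i
  proof -
    have tyP: "typing Map.empty (plug (snd (D ! i)) vs) TB" using ec tyD[OF i] unfolding elim_ctx_def by blast
    from wn[OF tyP] obtain E where E: "dstep\<^sup>*\<^sup>* [(1, plug (snd (D ! i)) vs)] E" "\<forall>x\<in>set E. is_nf (snd x)" by blast
    from nf_dist[OF E(1) tyP svi[OF i] E(2)] show ?thesis using E unfolding Q_def reduces_to_def by blast
  qed
  define Es where "Es = map (\<lambda>i. SOME E. Q i E) [0..<length D]"
  have lE: "length Es = length D" by (simp add: Es_def)
  have QE: "Q i (Es ! i)" if "i < length D" for i
    using someI_ex[OF exQ[OF that]] that by (simp add: Es_def)
  have cs: "cnt s (weighted D Es) = (if s = One then v else if s = Zero then 1 - v else 0)" for s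
  proof -
    have c: "cnt s (weighted D Es) = sum_list (map2 (\<lambda>x E. fst x * cnt s E) D Es)"
      by (rule cnt_weighted[OF lE])
    consider "s = One" | "s = Zero" | "s \<noteq> One \<and> s \<noteq> Zero" by blast
    then show ?thesis
    proof cases
      case 1
      have "map2 (\<lambda>x E. fst x * cnt s E) D Es = map2 (\<lambda>x w. fst x * w) D ws"
        by (rule map2_cong_nth) (use lE len QE 1 in \<open>auto simp: Q_def\<close>)
      then show ?thesis using c v 1 by (simp add: wsum_def)
    next
      case 2
      have "map2 (\<lambda>x E. fst x * cnt s E) D Es = map2 (\<lambda>x w. fst x * (1 - w)) D ws"
        by (rule map2_cong_nth) (use lE len QE 2 in \<open>auto simp: Q_def\<close>)
      then show ?thesis using c v 2 sum_one_minus[of D ws] len mD by simp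
    next
      case 3
      have "map2 (\<lambda>x E. fst x * cnt s E) D Es = map2 (\<lambda>x w. 0) D Es"
        by (rule map2_cong_nth) (use lE QE 3 in \<open>auto simp: Q_def\<close>)
      then show ?thesis using c 3 sum_list_zero[of "zip D Es" "\<lambda>(x, E). fst x * cnt s E"] by simp
    qed
  qed
  show ?thesis using lE QE cs unfolding Q_def by (intro exI[of _ Es]) auto
qed

theorem theorem1:
  assumes "typing Map.empty t A"
    and "reduces_to t D1"
    and "reduces_to t D2"
  shows "comp_equiv A D1 D2"
  unfolding comp_equiv_def
proof (intro conjI allI impI)
  show "\<forall>x\<in>set D1 \<union> set D2. typing Map.empty (snd x) A"
    using reach_inv1[OF assms(2)[unfolded reduces_to_def] assms(1)]
          reach_inv1[OF assms(3)[unfolded reduces_to_def] assms(1)] by auto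
  fix vs assume ec: "elim_ctx A vs"
  have tyP: "typing Map.empty (plug t vs) TB" using ec assms(1) unfolding elim_ctx_def by blast
  from typing_den[OF tyP] obtain F where F: "den Map.empty (plug t vs) TB F" by blast
  define v where "v = F (\<lambda>_ _. 0) 0"
  have sv: "semval (plug t vs) v" unfolding semval_def v_def using F by blast
  from good[OF assms(2) assms(1) ec sv] obtain E1 where E1: "length E1 = length D1"
     "\<forall>i<length D1. reduces_to (plug (snd (D1 ! i)) vs) (E1 ! i) \<and> (\<forall>x\<in>set (E1 ! i). is_nf (snd x))"
     "\<forall>s. cnt s (weighted D1 E1) = (if s = One then v else if s = Zero then 1 - v else 0)" by blast
  from good[OF assms(3) assms(1) ec sv] obtain E2 where E2: "length E2 = length D2"
     "\<forall>i<length D2. reduces_to (plug (snd (D2 ! i)) vs) (E2 ! i) \<and> (\<forall>x\<in>set (E2 ! i). is_nf (snd x))"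
     "\<forall>s. cnt s (weighted D2 E2) = (if s = One then v else if s = Zero then 1 - v else 0)" by blast
  have "dist_sim (weighted D1 E1) (weighted D2 E2)"
    unfolding dist_sim_def using E1(3) E2(3) unfolding cnt_def by simp
  then show "\<exists>E1 E2. length E1 = length D1 \<and> length E2 = length D2 \<and>
          (\<forall>i<length D1. reduces_to (plug (snd (D1 ! i)) vs) (E1 ! i) \<and> (\<forall>x\<in>set (E1 ! i). is_nf (snd x))) \<and>
          (\<forall>j<length D2. reduces_to (plug (snd (D2 ! j)) vs) (E2 ! j) \<and> (\<forall>x\<in>set (E2 ! j). is_nf (snd x))) \<and>
          dist_sim (weighted D1 E1) (weighted D2 E2)"
    using E1(1,2) E2(1,2) by blast
qed


end
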